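(* Let $m\ge1$ be an integer. For every $f\in\mathsf{D}(A_0^m)$ with $f(+\infty)=0$, setting $(If)(x):=\int_0^xf(y)\,dy$, \[ \|f\,If\|_{\mathsf{D}(A_0^m)}\le N\|f\|^2_{\mathsf{D}(A_0^m)}, \] where $N$ depends only on $m$ and $w$.
   Context: Fix $w>0$. $H(\mathbb{R}_+)$ is the Hilbert space of locally integrable (absolutely continuous) functions $f$ on $\mathbb{R}_+$ with $f'\in L^2(\mathbb{R}_+,e^{wx}dx)$, with inner product $\langle f,g\rangle=f(+\infty)g(+\infty)+\int_0^\infty f'(x)g'(x)e^{wx}dx$, where $f(+\infty)=\lim_{x\to\infty}f(x)$ exists. $A_0$ is the generator of the left-translation semigroup on $H(\mathbb{R}_+)$: $A_0\phi=\phi'$ on $\mathsf{D}(A_0)=\{\phi\in H(\mathbb{R}_+):\phi'\in H(\mathbb{R}_+)\}$; $\mathsf{D}(A_0^m)$ has the graph norm $\|f\|^2_{\mathsf{D}(A_0^m)}=\sum_{j=0}^m\|A_0^jf\|^2_{H(\mathbb{R}_+)}$. *)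

theory Defs
  imports "HOL-Analysis.Analysis"
begin

text \<open>Functions on R_+ = [0,\<infinity>) are represented as real \<Rightarrow> real; only values on [0,\<infinity>) matter.\<close>

definition weak_deriv :: "(real \<Rightarrow> real) \<Rightarrow> (real \<Rightarrow> real) \<Rightarrow> bool" where
  "weak_deriv f g \<longleftrightarrow>
     (\<forall>x\<ge>0. set_integrable lborel {0..x} g \<and> f x = f 0 + (LINT y:{0..x}|lborel. g y))"

definition inH :: "real \<Rightarrow> (real \<Rightarrow> real) \<Rightarrow> bool" where
  "inH w f \<longleftrightarrow>
     (\<exists>g. weak_deriv f g \<and> set_integrable lborel {0..} (\<lambda>x. (g x)\<^sup>2 * exp (w * x)))
     \<and> (\<exists>L. (f \<longlongrightarrow> L) at_top)"

text \<open>A chosen derivative (preferring one lying in H, i.e. the continuous representative).\<close>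
definition Ader :: "real \<Rightarrow> (real \<Rightarrow> real) \<Rightarrow> (real \<Rightarrow> real)" where
  "Ader w f = (if \<exists>g. weak_deriv f g \<and> inH w g then (SOME g. weak_deriv f g \<and> inH w g)
               else (SOME g. weak_deriv f g))"

definition at_infty :: "(real \<Rightarrow> real) \<Rightarrow> real" where
  "at_infty f = Lim at_top f"

definition Hnorm2 :: "real \<Rightarrow> (real \<Rightarrow> real) \<Rightarrow> real" where
  "Hnorm2 w f = (at_infty f)\<^sup>2 + (LINT x:{0..}|lborel. (Ader w f x)\<^sup>2 * exp (w * x))"

fun A0pow :: "real \<Rightarrow> nat \<Rightarrow> (real \<Rightarrow> real) \<Rightarrow> (real \<Rightarrow> real)" where
  "A0pow w 0 f = f"
| "A0pow w (Suc j) f = Ader w (A0pow w j f)"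

definition inD :: "real \<Rightarrow> nat \<Rightarrow> (real \<Rightarrow> real) \<Rightarrow> bool" where
  "inD w m f \<longleftrightarrow> (\<forall>j\<le>m. inH w (A0pow w j f))"

definition Dnorm :: "real \<Rightarrow> nat \<Rightarrow> (real \<Rightarrow> real) \<Rightarrow> real" where
  "Dnorm w m f = sqrt (\<Sum>j\<le>m. Hnorm2 w (A0pow w j f))"

definition Iop :: "(real \<Rightarrow> real) \<Rightarrow> real \<Rightarrow> real" where
  "Iop f x = (LINT y:{0..x}|lborel. f y)"

end

theory Submission
  imports Defs
begin

lemma wd_int: "weak_deriv f g \<Longrightarrow> 0 \<le> x \<Longrightarrow> set_integrable lborel {0..x} g"
  unfolding weak_deriv_def by blast

lemma wd_eq: "weak_deriv f g \<Longrightarrow> 0 \<le> x \<Longrightarrow> f x = f 0 + (LINT y:{0..x}|lborel. g y)"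
  unfolding weak_deriv_def by blast

lemma wd_split:
  assumes "weak_deriv f g" "0 \<le> a" "a \<le> b"
  shows "f b - f a = (LINT y:{a<..b}|lborel. g y)"
proof -
  have "{0..b} = {0..a} \<union> {a<..b}" using assms by auto
  have i1: "set_integrable lborel {0..a} g" using wd_int assms by blast
  have ib: "set_integrable lborel {0..b} g" using wd_int assms by (meson order_trans)
  have i2: "set_integrable lborel {a<..b} g"
    by (rule set_integrable_subset[OF ib]) (use assms in auto)
  have "(LINT y:{0..b}|lborel. g y) = (LINT y:{0..a}|lborel. g y) + (LINT y:{a<..b}|lborel. g y)"
    by (subst \<open>{0..b} = _\<close>, rule set_integral_Un) (use i1 i2 in auto)
  then show ?thesis using wd_eq[OF assms(1), of a] wd_eq[OF assms(1), of b] assms by auto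
qed

lemma wd_int_sub:
  assumes "weak_deriv f g" "0 \<le> a" "a \<le> b"
  shows "set_integrable lborel {a<..b} g" "set_integrable lborel {a..b} g"
proof -
  have "set_integrable lborel {0..b} g" using wd_int assms by (meson order_trans)
  then show "set_integrable lborel {a<..b} g" "set_integrable lborel {a..b} g"
    by (rule set_integrable_subset, simp, use assms in auto)+
qed

lemma wd_local:
  assumes "weak_deriv f g" "\<And>x. 0 \<le> x \<Longrightarrow> f' x = f x" "\<And>x. 0 \<le> x \<Longrightarrow> g' x = g x"
  shows "weak_deriv f' g'"
proof -
  have "set_integrable lborel {0..x} g' \<and> (LINT y:{0..x}|lborel. g' y) = (LINT y:{0..x}|lborel. g y)" if "0 \<le> x" for x
  proof
    show "set_integrable lborel {0..x} g'"
      using wd_int[OF assms(1) that] set_integrable_cong[of lborel lborel "{0..x}" "{0..x}" g' g] assms(3) by auto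
    show "(LINT y:{0..x}|lborel. g' y) = (LINT y:{0..x}|lborel. g y)"
      by (rule set_lebesgue_integral_cong) (use assms(3) in auto)
  qed
  note h = this
  show ?thesis unfolding weak_deriv_def
  proof (intro allI impI conjI)
    fix x :: real assume x: "0 \<le> x"
    show "set_integrable lborel {0..x} g'" using h[OF x] by blast
    have "f x = f 0 + (LINT y:{0..x}|lborel. g y)" using wd_eq[OF assms(1) x] .
    then show "f' x = f' 0 + (LINT y:{0..x}|lborel. g' y)"
      using h[OF x] assms(2)[OF x] assms(2)[of 0] by simp
  qed
qed

lemma wd_add:
  assumes "weak_deriv f g" "weak_deriv f' g'"
  shows "weak_deriv (\<lambda>x. f x + f' x) (\<lambda>x. g x + g' x)"
  unfolding weak_deriv_def
proof (intro allI impI conjI)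
  fix x :: real assume x: "0 \<le> x"
  note i1 = wd_int[OF assms(1) x] and i2 = wd_int[OF assms(2) x]
  show "set_integrable lborel {0..x} (\<lambda>x. g x + g' x)" using i1 i2 by (rule set_integral_add)
  show "f x + f' x = f 0 + f' 0 + (LINT y:{0..x}|lborel. g y + g' y)"
    using wd_eq[OF assms(1) x] wd_eq[OF assms(2) x] set_integral_add(2)[OF i1 i2] by simp
qed

lemma wd_cmult:
  assumes "weak_deriv f g"
  shows "weak_deriv (\<lambda>x. c * f x) (\<lambda>x. c * g x)"
  unfolding weak_deriv_def
proof (intro allI impI conjI)
  fix x :: real assume x: "0 \<le> x"
  note i1 = wd_int[OF assms(1) x]
  show "set_integrable lborel {0..x} (\<lambda>x. c * g x)" using i1 by simp
  show "c * f x = c * f 0 + (LINT y:{0..x}|lborel. c * g y)"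
    using wd_eq[OF assms(1) x] by (simp add: algebra_simps)
qed

lemma wd_zero: "weak_deriv (\<lambda>x. 0) (\<lambda>x. 0)"
  unfolding weak_deriv_def by (simp add: set_integrable_def)

lemma wd_sum: "(\<And>i. i \<in> A \<Longrightarrow> weak_deriv (f i) (g i)) \<Longrightarrow>
   weak_deriv (\<lambda>x. \<Sum>i\<in>A. f i x) (\<lambda>x. \<Sum>i\<in>A. g i x)"
proof (induction A rule: infinite_finite_induct)
  case (infinite A) then show ?case by (simp add: wd_zero)
next
  case empty then show ?case by (simp add: wd_zero)
next
  case (insert a A)
  have "weak_deriv (\<lambda>x. f a x + (\<Sum>i\<in>A. f i x)) (\<lambda>x. g a x + (\<Sum>i\<in>A. g i x))"
    by (rule wd_add) (use insert in auto)
  then show ?case using insert(1,2) by simp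
qed

lemma wd_cont:
  assumes "weak_deriv f g"
  shows "continuous_on {0..} f"
  unfolding continuous_on_eq_continuous_within
proof
  fix x0 :: real assume "x0 \<in> {0..}"
  then have x0: "0 \<le> x0" by simp
  define b where "b = x0 + 1"
  have ib: "set_integrable lborel {0..b} g" using wd_int[OF assms] x0 b_def by simp
  have hk: "g integrable_on {0..b}" using set_borel_integral_eq_integral(1)[OF ib] .
  have "continuous_on {0..b} (\<lambda>x. integral {0..x} g)"
    by (rule indefinite_integral_continuous_1[OF hk])
  moreover have "f x = f 0 + integral {0..x} g" if "x \<in> {0..b}" for x
  proof -
    have "set_integrable lborel {0..x} g" using wd_int[OF assms] that by simp
    then show ?thesis using wd_eq[OF assms, of x] that set_borel_integral_eq_integral(2) by simp
  qed
  ultimately have "continuous_on {0..b} f"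
  proof -
    assume c: "continuous_on {0..b} (\<lambda>x. integral {0..x} g)"
      and e: "\<And>x. x \<in> {0..b} \<Longrightarrow> f x = f 0 + integral {0..x} g"
    have "continuous_on {0..b} (\<lambda>x. f 0 + integral {0..x} g)" by (rule continuous_on_add[OF continuous_on_const c])
    then show ?thesis by (rule continuous_on_eq) (rule e[symmetric])
  qed
  then have "continuous (at x0 within {0..b}) f"
    using x0 b_def unfolding continuous_on_eq_continuous_within by simp
  moreover have "at x0 within {0..} = at x0 within {0..b}"
    by (rule at_within_nhd[where S="{..<b}"]) (auto simp: b_def)
  ultimately show "continuous (at x0 within {0..}) f" by simp
qed

lemma wd_meas:
  assumes "weak_deriv f g"
  shows "(\<lambda>x. indicator {0..} x * g x) \<in> borel_measurable borel"
proof (rule borel_measurable_LIMSEQ_real)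
  fix n :: nat
  have "set_integrable lborel {0..real n} g" using wd_int[OF assms] by simp
  then show "(\<lambda>x. indicator {0..real n} x * g x) \<in> borel_measurable borel"
    unfolding set_integrable_def by (simp add: borel_measurable_integrable)
next
  fix x :: real
  show "(\<lambda>n. indicator {0..real n} x * g x) \<longlonglongrightarrow> indicator {0..} x * g x"
  proof (rule tendsto_eventually)
    obtain N :: nat where "x \<le> real N" using real_arch_simple by blast
    then show "\<forall>\<^sub>F n in sequentially. indicator {0..real n} x * g x = indicator {0..} x * g x"
      unfolding eventually_sequentially
      by (intro exI[of _ N]) (auto simp: indicator_def)
  qed
qed

lemma AE_zero_aux:
  assumes wd: "weak_deriv (\<lambda>x. 0) d"
  shows "AE x in lborel. indicator {0..real n} x * d x = 0"
proof -
  define \<phi> where "\<phi> = (\<lambda>x. indicator {0..real n} x * d x)"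
  have iphi: "integrable lborel \<phi>"
    using wd_int[OF wd, of "real n"] unfolding set_integrable_def \<phi>_def by simp
  define p where "p = (\<lambda>x. max 0 (\<phi> x))"
  define q where "q = (\<lambda>x. max 0 (- \<phi> x))"
  have ip: "integrable lborel p" unfolding p_def
    by (intro integrable_max Bochner_Integration.integrable_zero iphi)
  have iq: "integrable lborel q" unfolding q_def
    by (intro integrable_max Bochner_Integration.integrable_zero integrable_minus iphi)
  have mp[measurable]: "p \<in> borel_measurable borel" using ip by (simp add: borel_measurable_integrable)
  have mq[measurable]: "q \<in> borel_measurable borel" using iq by (simp add: borel_measurable_integrable)
  have zero: "(\<integral>x. \<phi> x * indicator {a<..} x \<partial>lborel) = 0" for a
  proof -
    have "(\<integral>x. \<phi> x * indicator {a<..} x \<partial>lborel) = (LINT x:({a<..} \<inter> {0..real n})|lborel. d x)"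
      unfolding set_lebesgue_integral_def \<phi>_def
      by (rule Bochner_Integration.integral_cong) (simp_all split: split_indicator)
    also have "\<dots> = 0"
    proof (cases "a < 0")
      case True
      then have "{a<..} \<inter> {0..real n} = {0..real n}" by auto
      then show ?thesis using wd_eq[OF wd, of "real n"] by simp
    next
      case False
      then have "{a<..} \<inter> {0..real n} = {a<..max a (real n)}" by auto
      then show ?thesis using wd_split[OF wd, of a "max a (real n)"] False by simp
    qed
    finally show ?thesis .
  qed
  have eqm: "density lborel (\<lambda>x. ennreal (p x)) = density lborel (\<lambda>x. ennreal (q x))"
  proof (rule measure_eqI_lessThan)
    show "sets (density lborel (\<lambda>x. ennreal (p x))) = sets borel" by simp
    show "sets (density lborel (\<lambda>x. ennreal (q x))) = sets borel" by simp
    fix a :: real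
    have ipa: "integrable lborel (\<lambda>x. p x * indicator {a<..} x)"
      using ip by (intro integrable_real_mult_indicator) auto
    have iqa: "integrable lborel (\<lambda>x. q x * indicator {a<..} x)"
      using iq by (intro integrable_real_mult_indicator) auto
    have ep: "emeasure (density lborel (\<lambda>x. ennreal (p x))) {a<..} = ennreal (\<integral>x. p x * indicator {a<..} x \<partial>lborel)"
    proof -
      have "emeasure (density lborel (\<lambda>x. ennreal (p x))) {a<..} = (\<integral>\<^sup>+x. ennreal (p x) * indicator {a<..} x \<partial>lborel)"
        by (rule emeasure_density) auto
      also have "\<dots> = (\<integral>\<^sup>+x. ennreal (p x * indicator {a<..} x) \<partial>lborel)"
        by (intro nn_integral_cong) (simp split: split_indicator)
      also have "\<dots> = ennreal (\<integral>x. p x * indicator {a<..} x \<partial>lborel)"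
        by (rule nn_integral_eq_integral[OF ipa]) (intro AE_I2, simp add: p_def)
      finally show ?thesis .
    qed
    have eq: "emeasure (density lborel (\<lambda>x. ennreal (q x))) {a<..} = ennreal (\<integral>x. q x * indicator {a<..} x \<partial>lborel)"
    proof -
      have "emeasure (density lborel (\<lambda>x. ennreal (q x))) {a<..} = (\<integral>\<^sup>+x. ennreal (q x) * indicator {a<..} x \<partial>lborel)"
        by (rule emeasure_density) auto
      also have "\<dots> = (\<integral>\<^sup>+x. ennreal (q x * indicator {a<..} x) \<partial>lborel)"
        by (intro nn_integral_cong) (simp split: split_indicator)
      also have "\<dots> = ennreal (\<integral>x. q x * indicator {a<..} x \<partial>lborel)"
        by (rule nn_integral_eq_integral[OF iqa]) (intro AE_I2, simp add: q_def)
      finally show ?thesis .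
    qed
    have "(\<integral>x. p x * indicator {a<..} x \<partial>lborel) - (\<integral>x. q x * indicator {a<..} x \<partial>lborel)
          = (\<integral>x. \<phi> x * indicator {a<..} x \<partial>lborel)"
      by (subst Bochner_Integration.integral_diff[OF ipa iqa, symmetric])
         (rule Bochner_Integration.integral_cong, simp_all add: p_def q_def max_def split: split_indicator)
    then show "emeasure (density lborel (\<lambda>x. ennreal (p x))) {a<..} = emeasure (density lborel (\<lambda>x. ennreal (q x))) {a<..}"
      using ep eq zero[of a] by simp
    show "emeasure (density lborel (\<lambda>x. ennreal (p x))) {a<..} < \<infinity>"
      using ep by simp
  qed
  then have "AE x in lborel. ennreal (p x) = ennreal (q x)"
    by (subst (asm) sigma_finite_measure.density_unique_iff[OF sigma_finite_lborel]) auto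
  then show ?thesis
  proof eventually_elim
    case (elim x)
    have "p x \<ge> 0" "q x \<ge> 0" by (simp_all add: p_def q_def)
    then have pq: "p x = q x" using elim ennreal_inj by blast
    have "\<phi> x = p x - q x" unfolding p_def q_def by (cases "\<phi> x \<ge> 0") (simp_all add: max_def)
    then have "\<phi> x = 0" using pq by simp
    then show ?case unfolding \<phi>_def .
  qed
qed

lemma AE_zero:
  assumes wd: "weak_deriv (\<lambda>x. 0) d"
  shows "AE x in lborel. 0 \<le> x \<longrightarrow> d x = 0"
proof -
  have "AE x in lborel. \<forall>n::nat. indicator {0..real n} x * d x = 0"
    by (rule AE_all_countable[THEN iffD2]) (use AE_zero_aux[OF wd] in blast)
  then show ?thesis
  proof eventually_elim
    case (elim x)
    show ?case
    proof
      assume "0 \<le> x"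
      obtain N :: nat where "x \<le> real N" using real_arch_simple by blast
      then show "d x = 0" using elim[rule_format, of N] \<open>0 \<le> x\<close> by (simp add: indicator_def)
    qed
  qed
qed

lemma wd_AE_unique:
  assumes "weak_deriv f g" "weak_deriv f h"
  shows "AE x in lborel. 0 \<le> x \<longrightarrow> g x = h x"
proof -
  have "weak_deriv (\<lambda>x. f x + (-1) * f x) (\<lambda>x. g x + (-1) * h x)"
    by (intro wd_add wd_cmult assms)
  then have "weak_deriv (\<lambda>x. 0) (\<lambda>x. g x - h x)"
    by (rule wd_local) auto
  from AE_zero[OF this] show ?thesis by eventually_elim auto
qed

lemma AE_cont_unique:
  fixes g h :: "real \<Rightarrow> real"
  assumes cg: "continuous_on {0..} g" and ch: "continuous_on {0..} h"
    and ae: "AE x in lborel. 0 \<le> x \<longrightarrow> g x = h x" and x: "0 \<le> x"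
  shows "g x = h x"
proof (rule ccontr)
  assume ne: "g x \<noteq> h x"
  define k where "k = (\<lambda>y. g y - h y)"
  have "continuous_on {0..} k" unfolding k_def using cg ch by (intro continuous_intros)
  then have "continuous (at x within {0..}) k" using x continuous_on_eq_continuous_within by auto
  then obtain \<delta> where d: "\<delta> > 0" "\<And>y. y \<in> {0..} \<Longrightarrow> dist y x < \<delta> \<Longrightarrow> dist (k y) (k x) < \<bar>k x\<bar>"
  proof -
    have "\<bar>k x\<bar> > 0" using ne by (simp add: k_def)
    then show ?thesis using that \<open>continuous (at x within {0..}) k\<close>
      unfolding continuous_within_eps_delta by blast
  qed
  have sub: "{x<..<x+\<delta>} \<subseteq> {y \<in> space lborel. \<not> (0 \<le> y \<longrightarrow> g y = h y)}"
  proof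
    fix y assume y: "y \<in> {x<..<x+\<delta>}"
    then have "dist (k y) (k x) < \<bar>k x\<bar>" using d(2)[of y] x by (auto simp: dist_real_def)
    then have "k y \<noteq> 0" by (auto simp: dist_real_def)
    then show "y \<in> {y \<in> space lborel. \<not> (0 \<le> y \<longrightarrow> g y = h y)}" using y x by (auto simp: k_def)
  qed
  from ae obtain N where N: "{y \<in> space lborel. \<not> (0 \<le> y \<longrightarrow> g y = h y)} \<subseteq> N" "emeasure lborel N = 0" "N \<in> sets lborel"
    by (rule AE_E)
  have "emeasure lborel {x<..<x+\<delta>} \<le> emeasure lborel N"
    using sub N by (intro emeasure_mono) auto
  then show False using N(2) d(1) by simp
qed

lemma cont_bounded_Icc:
  fixes v :: "real \<Rightarrow> real"
  assumes "continuous_on {a..b} v"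
  obtains B where "B \<ge> 0" "\<And>y. y \<in> {a..b} \<Longrightarrow> \<bar>v y\<bar> \<le> B"
proof -
  have "compact (v ` {a..b})" by (rule compact_continuous_image[OF assms compact_Icc])
  then have "bounded (v ` {a..b})" by (rule compact_imp_bounded)
  then obtain B where "B > 0" "\<And>z. z \<in> v ` {a..b} \<Longrightarrow> norm z \<le> B" by (auto simp: bounded_pos)
  then show ?thesis using that[of B] by auto
qed

lemma si_mult_cont:
  fixes g v :: "real \<Rightarrow> real"
  assumes g: "set_integrable lborel {a..b} g" and v: "continuous_on {a..b} v"
  shows "set_integrable lborel {a..b} (\<lambda>y. g y * v y)"
proof -
  obtain B where B: "B \<ge> 0" "\<And>y. y \<in> {a..b} \<Longrightarrow> \<bar>v y\<bar> \<le> B" using cont_bounded_Icc[OF v] by blast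
  have ig: "integrable lborel (\<lambda>y. B * (indicator {a..b} y * g y))"
    using g unfolding set_integrable_def by simp
  have mg: "(\<lambda>y. indicator {a..b} y * g y) \<in> borel_measurable borel"
    using g unfolding set_integrable_def by (simp add: borel_measurable_integrable)
  have mv: "(\<lambda>y. indicator {a..b} y *\<^sub>R v y) \<in> borel_measurable borel"
    by (rule borel_measurable_continuous_on_indicator) (use v in auto)
  have "(\<lambda>y. (indicator {a..b} y * g y) * (indicator {a..b} y *\<^sub>R v y)) \<in> borel_measurable borel"
    using mg mv by measurable
  moreover have "(\<lambda>y. (indicator {a..b} y * g y) * (indicator {a..b} y *\<^sub>R v y)) = (\<lambda>y. indicator {a..b} y *\<^sub>R (g y * v y))"
    by (auto simp: indicator_def)
  ultimately have m: "(\<lambda>y. indicator {a..b} y *\<^sub>R (g y * v y)) \<in> borel_measurable lborel" by simp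
  show ?thesis unfolding set_integrable_def
  proof (rule Bochner_Integration.integrable_bound[OF ig m])
    show "AE y in lborel. norm (indicator {a..b} y *\<^sub>R (g y * v y)) \<le> norm (B * (indicator {a..b} y * g y))"
    proof (rule AE_I2)
      fix y
      show "norm (indicator {a..b} y *\<^sub>R (g y * v y)) \<le> norm (B * (indicator {a..b} y * g y))"
      proof (cases "y \<in> {a..b}")
        case True
        then have "\<bar>g y * v y\<bar> \<le> \<bar>g y\<bar> * B" using B(2)[OF True] by (simp add: abs_mult mult_left_mono)
        then show ?thesis using True B(1) by (simp add: abs_mult mult.commute)
      qed simp
    qed
  qed
qed

lemma point_null_int:
  fixes g :: "real \<Rightarrow> real"
  shows "(LINT y:{s..x}|lborel. g y) = (LINT y:{s<..x}|lborel. g y)"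
  by (rule set_integral_discrete_difference[where X="{s}"]) auto

lemma fubini_key:
  fixes u' v' :: "real \<Rightarrow> real"
  assumes iu: "set_integrable lborel {0..x} u'" and iv: "set_integrable lborel {0..x} v'" and x: "0 \<le> x"
  shows "(LINT t:{0..x}|lborel. u' t * (LINT s:{0..t}|lborel. v' s))
       + (LINT s:{0..x}|lborel. (LINT t:{0..s}|lborel. u' t) * v' s)
       = (LINT t:{0..x}|lborel. u' t) * (LINT s:{0..x}|lborel. v' s)"
proof -
  define a where "a = (\<lambda>t. indicator {0..x} t * u' t)"
  define b where "b = (\<lambda>s. indicator {0..x} s * v' s)"
  have ia: "integrable lborel a" using iu unfolding a_def set_integrable_def by simp
  have ib: "integrable lborel b" using iv unfolding b_def set_integrable_def by simp
  have ma[measurable]: "a \<in> borel_measurable borel" using ia by (simp add: borel_measurable_integrable)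
  have mb[measurable]: "b \<in> borel_measurable borel" using ib by (simp add: borel_measurable_integrable)
  define K where "K = (\<lambda>t s. a t * b s * indicator {..t} s)"
  have pr[measurable]: "Measurable.pred (borel \<Otimes>\<^sub>M borel) (\<lambda>x::real\<times>real. snd x \<in> {..fst x})"
  proof -
    have "{x::real\<times>real. snd x \<le> fst x} \<in> sets borel"
      by (intro borel_closed closed_Collect_le continuous_intros)
    then show ?thesis unfolding atMost_iff by (subst borel_prod) (simp add: pred_def)
  qed
  have mK: "case_prod K \<in> borel_measurable (lborel \<Otimes>\<^sub>M lborel)"
    unfolding K_def by measurable
  have intK: "integrable (lborel \<Otimes>\<^sub>M lborel) (case_prod K)"
  proof (rule lborel_pair.Fubini_integrable)
    show "case_prod K \<in> borel_measurable (lborel \<Otimes>\<^sub>M lborel)" by (rule mK)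
    have "integrable lborel (\<lambda>t. \<bar>a t\<bar> * (\<integral>s. \<bar>b s\<bar> \<partial>lborel))"
      using ia by (intro integrable_mult_left integrable_abs)
    then show "integrable lborel (\<lambda>t. \<integral>s. norm (case_prod K (t, s)) \<partial>lborel)"
    proof (rule Bochner_Integration.integrable_bound)
      show "(\<lambda>t. \<integral>s. norm (case_prod K (t, s)) \<partial>lborel) \<in> borel_measurable lborel"
        unfolding K_def by measurable
      show "AE t in lborel. norm (\<integral>s. norm (case_prod K (t, s)) \<partial>lborel) \<le> norm (\<bar>a t\<bar> * (\<integral>s. \<bar>b s\<bar> \<partial>lborel))"
      proof (rule AE_I2)
        fix t
        have "(\<integral>s. norm (case_prod K (t, s)) \<partial>lborel) = \<bar>a t\<bar> * (\<integral>s. \<bar>b s\<bar> * indicator {..t} s \<partial>lborel)"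
          unfolding K_def by (simp add: abs_mult mult.assoc)
        also have "\<dots> \<le> \<bar>a t\<bar> * (\<integral>s. \<bar>b s\<bar> \<partial>lborel)"
        proof (rule mult_left_mono)
          show "(\<integral>s. \<bar>b s\<bar> * indicator {..t} s \<partial>lborel) \<le> (\<integral>s. \<bar>b s\<bar> \<partial>lborel)"
            using ib by (intro integral_mono integrable_real_mult_indicator integrable_abs)
                        (auto simp: indicator_def)
        qed simp
        finally show "norm (\<integral>s. norm (case_prod K (t, s)) \<partial>lborel) \<le> norm (\<bar>a t\<bar> * (\<integral>s. \<bar>b s\<bar> \<partial>lborel))"
          by (simp add: integral_nonneg_AE)
      qed
    qed
    show "AE t in lborel. integrable lborel (\<lambda>s. case_prod K (t, s))"
      unfolding K_def using ib by (auto intro!: integrable_mult_right integrable_real_mult_indicator)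
  qed
  have F: "(\<integral>s. (\<integral>t. K t s \<partial>lborel) \<partial>lborel) = (\<integral>t. (\<integral>s. K t s \<partial>lborel) \<partial>lborel)"
    by (rule lborel_pair.Fubini_integral[OF intK])
  have in1: "(\<integral>s. K t s \<partial>lborel) = a t * (LINT s:{0..t}|lborel. v' s)" for t
  proof (cases "t \<in> {0..x}")
    case True
    have "(\<integral>s. K t s \<partial>lborel) = a t * (\<integral>s. b s * indicator {..t} s \<partial>lborel)"
      unfolding K_def by (simp add: mult.assoc)
    also have "(\<integral>s. b s * indicator {..t} s \<partial>lborel) = (LINT s:{0..t}|lborel. v' s)"
      unfolding set_lebesgue_integral_def b_def
      by (rule Bochner_Integration.integral_cong) (use True in \<open>auto simp: indicator_def\<close>)
    finally show ?thesis .
  next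
    case False
    then show ?thesis unfolding K_def a_def by simp
  qed
  have in2: "(\<integral>t. K t s \<partial>lborel) = b s * ((LINT t:{0..x}|lborel. u' t) - (LINT t:{0..s}|lborel. u' t))" for s
  proof (cases "s \<in> {0..x}")
    case True
    have "(\<integral>t. K t s \<partial>lborel) = (\<integral>t. b s * (a t * indicator {s..} t) \<partial>lborel)"
      unfolding K_def by (rule Bochner_Integration.integral_cong) (auto simp: indicator_def)
    also have "\<dots> = b s * (\<integral>t. a t * indicator {s..} t \<partial>lborel)" by simp
    also have "(\<integral>t. a t * indicator {s..} t \<partial>lborel) = (LINT t:{s..x}|lborel. u' t)"
      unfolding set_lebesgue_integral_def a_def
      by (rule Bochner_Integration.integral_cong) (use True in \<open>auto simp: indicator_def\<close>)
    also have "\<dots> = (LINT t:{s<..x}|lborel. u' t)" by (rule point_null_int)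
    also have "\<dots> = (LINT t:{0..x}|lborel. u' t) - (LINT t:{0..s}|lborel. u' t)"
    proof -
      have "{0..x} = {0..s} \<union> {s<..x}" using True by auto
      moreover have "set_integrable lborel {0..s} u'" "set_integrable lborel {s<..x} u'"
        using True by (auto intro: set_integrable_subset[OF iu])
      moreover have "{0..s} \<inter> {s<..x} = {}" by auto
      ultimately show ?thesis using set_integral_Un[of "{0..s}" "{s<..x}" lborel u'] by simp
    qed
    finally show ?thesis .
  next
    case False
    then show ?thesis unfolding K_def b_def by simp
  qed
  have lhs1: "(\<integral>t. (\<integral>s. K t s \<partial>lborel) \<partial>lborel) = (LINT t:{0..x}|lborel. u' t * (LINT s:{0..t}|lborel. v' s))"
    unfolding in1 set_lebesgue_integral_def a_def by (simp add: mult_ac)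
  have iU: "set_integrable lborel {0..x} (\<lambda>s. (LINT t:{0..s}|lborel. u' t) * v' s)"
  proof -
    have "continuous_on {0..} (\<lambda>s. 0 + (LINT t:{0..s}|lborel. indicator {0..x} t * u' t))"
    proof (rule wd_cont)
      show "weak_deriv (\<lambda>s. 0 + (LINT t:{0..s}|lborel. indicator {0..x} t * u' t)) (\<lambda>t. indicator {0..x} t * u' t)"
        unfolding weak_deriv_def
      proof (intro allI impI conjI)
        fix y :: real assume "0 \<le> y"
        have "set_integrable lborel {0..max x y} (\<lambda>t. indicator {0..x} t * u' t)"
        proof -
          have "(\<lambda>t. indicat_real {0..max x y} t *\<^sub>R (indicat_real {0..x} t * u' t)) = a"
            unfolding a_def by (rule ext) (auto split: split_indicator simp: max_def)
          then show ?thesis unfolding set_integrable_def using ia by simp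
        qed
        then show "set_integrable lborel {0..y} (\<lambda>t. indicator {0..x} t * u' t)"
          by (rule set_integrable_subset) auto
        show "0 + (LINT t:{0..y}|lborel. indicator {0..x} t * u' t)
            = 0 + (LINT t:{0..0}|lborel. indicator {0..x} t * u' t) + (LINT t:{0..y}|lborel. indicator {0..x} t * u' t)"
          using point_null_int[where s=0 and x=0 and g="\<lambda>t. indicator {0..x} t * u' t"] by (simp add: set_lebesgue_integral_def)
      qed
    qed
    then have c: "continuous_on {0..x} (\<lambda>s. (LINT t:{0..s}|lborel. indicator {0..x} t * u' t))"
      by (simp add: continuous_on_subset)
    have "continuous_on {0..x} (\<lambda>s. (LINT t:{0..s}|lborel. u' t))"
    proof (rule continuous_on_eq[OF c])
      fix s assume "s \<in> {0..x}"
      then show "(LINT t:{0..s}|lborel. indicator {0..x} t * u' t) = (LINT t:{0..s}|lborel. u' t)"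
        by (intro set_lebesgue_integral_cong) (auto simp: indicator_def)
    qed
    then have "set_integrable lborel {0..x} (\<lambda>s. v' s * (LINT t:{0..s}|lborel. u' t))"
      by (rule si_mult_cont[OF iv])
    then show ?thesis by (simp add: mult.commute)
  qed
  have rhs1: "(\<integral>s. (\<integral>t. K t s \<partial>lborel) \<partial>lborel) = (LINT t:{0..x}|lborel. u' t) * (LINT s:{0..x}|lborel. v' s)
       - (LINT s:{0..x}|lborel. (LINT t:{0..s}|lborel. u' t) * v' s)"
  proof -
    have "(\<integral>s. (\<integral>t. K t s \<partial>lborel) \<partial>lborel) = (\<integral>s. b s * (LINT t:{0..x}|lborel. u' t) - indicator {0..x} s * ((LINT t:{0..s}|lborel. u' t) * v' s) \<partial>lborel)"
      unfolding in2 by (rule Bochner_Integration.integral_cong) (auto simp: b_def algebra_simps)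
    also have "\<dots> = (\<integral>s. b s * (LINT t:{0..x}|lborel. u' t) \<partial>lborel) - (\<integral>s. indicator {0..x} s * ((LINT t:{0..s}|lborel. u' t) * v' s) \<partial>lborel)"
      using iU ib unfolding set_integrable_def
      by (intro Bochner_Integration.integral_diff) auto
    also have "(\<integral>s. b s * (LINT t:{0..x}|lborel. u' t) \<partial>lborel) = (\<integral>s. b s \<partial>lborel) * (LINT t:{0..x}|lborel. u' t)"
      by (rule integral_mult_left_zero)
    also have "(\<integral>s. b s \<partial>lborel) = (LINT s:{0..x}|lborel. v' s)"
      unfolding b_def set_lebesgue_integral_def by simp
    also have "(\<integral>s. indicator {0..x} s * ((LINT t:{0..s}|lborel. u' t) * v' s) \<partial>lborel)
        = (LINT s:{0..x}|lborel. (LINT t:{0..s}|lborel. u' t) * v' s)"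
      unfolding set_lebesgue_integral_def by simp
    finally show ?thesis by (simp add: mult.commute)
  qed
  show ?thesis using F lhs1 rhs1 by simp
qed

lemma wd_mult:
  assumes u: "weak_deriv u u'" and v: "weak_deriv v v'"
  shows "weak_deriv (\<lambda>x. u x * v x) (\<lambda>x. u' x * v x + u x * v' x)"
  unfolding weak_deriv_def
proof (intro allI impI conjI)
  fix x :: real assume x: "0 \<le> x"
  have cu: "continuous_on {0..x} u" using wd_cont[OF u] by (rule continuous_on_subset) auto
  have cv: "continuous_on {0..x} v" using wd_cont[OF v] by (rule continuous_on_subset) auto
  have iu: "set_integrable lborel {0..x} u'" using wd_int[OF u x] .
  have iv: "set_integrable lborel {0..x} v'" using wd_int[OF v x] .
  have i1: "set_integrable lborel {0..x} (\<lambda>y. u' y * v y)" by (rule si_mult_cont[OF iu cv])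
  have i2': "set_integrable lborel {0..x} (\<lambda>y. v' y * u y)" by (rule si_mult_cont[OF iv cu])
  have i2: "set_integrable lborel {0..x} (\<lambda>y. u y * v' y)" using i2' by (simp add: mult.commute)
  show "set_integrable lborel {0..x} (\<lambda>y. u' y * v y + u y * v' y)" using i1 i2 by (rule set_integral_add)
  have key: "(LINT t:{0..x}|lborel. u' t * (LINT s:{0..t}|lborel. v' s))
       + (LINT s:{0..x}|lborel. (LINT t:{0..s}|lborel. u' t) * v' s)
       = (LINT t:{0..x}|lborel. u' t) * (LINT s:{0..x}|lborel. v' s)"
    by (rule fubini_key[OF iu iv x])
  have k1: "(LINT t:{0..x}|lborel. u' t * (LINT s:{0..t}|lborel. v' s)) = (LINT t:{0..x}|lborel. u' t * v t - v 0 * u' t)"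
  proof (rule set_lebesgue_integral_cong)
    show "\<forall>t. t \<in> {0..x} \<longrightarrow> u' t * (LINT s:{0..t}|lborel. v' s) = u' t * v t - v 0 * u' t"
    proof (intro allI impI)
      fix t assume "t \<in> {0..x}"
      then have "v t = v 0 + (LINT s:{0..t}|lborel. v' s)" using wd_eq[OF v, of t] by simp
      then show "u' t * (LINT s:{0..t}|lborel. v' s) = u' t * v t - v 0 * u' t" by (simp add: algebra_simps)
    qed
  qed simp
  have k2: "(LINT s:{0..x}|lborel. (LINT t:{0..s}|lborel. u' t) * v' s) = (LINT s:{0..x}|lborel. u s * v' s - u 0 * v' s)"
  proof (rule set_lebesgue_integral_cong)
    show "\<forall>t. t \<in> {0..x} \<longrightarrow> (LINT s:{0..t}|lborel. u' s) * v' t = u t * v' t - u 0 * v' t"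
    proof (intro allI impI)
      fix t assume "t \<in> {0..x}"
      then have "u t = u 0 + (LINT s:{0..t}|lborel. u' s)" using wd_eq[OF u, of t] by simp
      then show "(LINT s:{0..t}|lborel. u' s) * v' t = u t * v' t - u 0 * v' t" by (simp add: algebra_simps)
    qed
  qed simp
  have k3: "(LINT t:{0..x}|lborel. u' t * v t - v 0 * u' t) = (LINT t:{0..x}|lborel. u' t * v t) - v 0 * (LINT t:{0..x}|lborel. u' t)"
    using i1 iu by (simp add: set_integral_diff)
  have k4: "(LINT s:{0..x}|lborel. u s * v' s - u 0 * v' s) = (LINT s:{0..x}|lborel. u s * v' s) - u 0 * (LINT s:{0..x}|lborel. v' s)"
    using i2 iv by (simp add: set_integral_diff)
  have k5: "(LINT y:{0..x}|lborel. u' y * v y + u y * v' y) = (LINT y:{0..x}|lborel. u' y * v y) + (LINT y:{0..x}|lborel. u y * v' y)"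
    using i1 i2 by (simp add: set_integral_add)
  have eu: "(LINT t:{0..x}|lborel. u' t) = u x - u 0" using wd_eq[OF u x] by simp
  have ev: "(LINT t:{0..x}|lborel. v' t) = v x - v 0" using wd_eq[OF v x] by simp
  show "u x * v x = u 0 * v 0 + (LINT y:{0..x}|lborel. u' y * v y + u y * v' y)"
    using key k1 k2 k3 k4 k5 eu ev by (simp add: algebra_simps)
qed

lemma exp_int_Ioc:
  fixes c a b :: real
  assumes c: "c > 0" and ab: "a \<le> b"
  shows "(LINT s:{a<..b}|lborel. exp (- c * s)) = (exp (- c * a) - exp (- c * b)) / c"
proof -
  have "(LBINT s=a..b. exp (- c * s)) = (- exp (- c * b) / c) - (- exp (- c * a) / c)"
  proof (rule interval_integral_FTC_finite)
    show "continuous_on {min a b..max a b} (\<lambda>s. exp (- c * s))" by (intro continuous_intros)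
    fix x assume "min a b \<le> x" "x \<le> max a b"
    have "((\<lambda>s. - exp (- c * s) / c) has_real_derivative exp (- c * x)) (at x)"
      using c by (auto intro!: derivative_eq_intros simp: field_simps)
    then show "((\<lambda>s. - exp (- c * s) / c) has_vector_derivative exp (- c * x)) (at x within {min a b..max a b})"
      by (simp add: has_real_derivative_iff_has_vector_derivative has_vector_derivative_at_within)
  qed
  then have "(LINT s:{a<..b}|lborel. exp (- c * s)) = exp (- c * a) / c - exp (- c * b) / c"
    using interval_integral_Ioc[OF ab, of "\<lambda>s. exp (- c * s)"] by simp
  then show ?thesis by (simp add: diff_divide_distrib)
qed

lemma exp_int_Ioc_le:
  fixes c a b :: real
  assumes c: "c > 0" and ab: "a \<le> b"
  shows "(LINT s:{a<..b}|lborel. exp (- c * s)) \<le> exp (- c * a) / c"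
  using exp_int_Ioc[OF c ab] c by (simp add: divide_right_mono)

lemma exp_si_Ioc: "set_integrable lborel {a<..b} (\<lambda>s. exp (- c * s :: real))"
proof -
  have "set_integrable lborel {a..b} (\<lambda>s. exp (- c * s :: real))"
    by (rule borel_integrable_atLeastAtMost') (intro continuous_intros)
  then show ?thesis by (rule set_integrable_subset) auto
qed

lemma exp_si_atLeast:
  fixes c :: real assumes c: "c > 0"
  shows "set_integrable lborel {0..} (\<lambda>s. exp (- c * s))"
proof -
  have "(\<integral>\<^sup>+x. ennreal (exp (- c * x)) * indicator {0 ..} x \<partial>lborel) = 0 - (- exp (- c * 0) / c)"
  proof (rule nn_integral_FTC_atLeast)
    show "(\<lambda>x. exp (- c * x)) \<in> borel_measurable borel" by measurable
    fix x :: real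
    show "((\<lambda>s. - exp (- c * s) / c) has_real_derivative exp (- c * x)) (at x)"
      using c by (auto intro!: derivative_eq_intros simp: field_simps)
    show "0 \<le> exp (- c * x)" by simp
  next
    have "((\<lambda>s. exp (- c * s)) \<longlongrightarrow> 0) at_top"
      using c by real_asymp
    then have "((\<lambda>s. - exp (- c * s) / c) \<longlongrightarrow> - 0 / c) at_top"
      by (intro tendsto_divide tendsto_minus tendsto_const) (use c in auto)
    then show "((\<lambda>s. - exp (- c * s) / c) \<longlongrightarrow> 0) at_top" by simp
  qed
  moreover have "(\<integral>\<^sup>+x. ennreal (exp (- c * x) * indicator {0 ..} x) \<partial>lborel) = (\<integral>\<^sup>+x. ennreal (exp (- c * x)) * indicator {0 ..} x \<partial>lborel)"
    by (intro nn_integral_cong) (simp split: split_indicator)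
  ultimately have fin: "(\<integral>\<^sup>+x. ennreal (exp (- c * x) * indicator {0 ..} x) \<partial>lborel) < \<infinity>"
    by simp
  show ?thesis unfolding set_integrable_def
    using integrableI_nonneg[of "\<lambda>x. exp (- c * x) * indicator {0 ..} x" lborel] fin
    by (simp add: mult.commute)
qed

lemma amgm_aux:
  fixes g t e :: real
  assumes t: "t > 0" and e: "e > 0"
  shows "\<bar>g\<bar> \<le> (t * g\<^sup>2 * e + (1 / e) / t) / 2"
proof -
  have "0 \<le> (t * \<bar>g\<bar> * e - 1)\<^sup>2 / (t * e)" using t e by simp
  also have "(t * \<bar>g\<bar> * e - 1)\<^sup>2 / (t * e) = t * g\<^sup>2 * e + (1 / e) / t - 2 * \<bar>g\<bar>"
    using t e by (simp add: field_simps power2_eq_square)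
  finally show ?thesis by simp
qed

lemma opt_aux:
  fixes a E c :: real
  assumes E: "E \<ge> 0" and c: "c > 0" and h: "\<And>t. t > 0 \<Longrightarrow> a \<le> (t * E + c / t) / 2"
  shows "a \<le> sqrt (E * c)"
proof (cases "E = 0")
  case True
  show ?thesis
  proof (rule ccontr)
    assume "\<not> a \<le> sqrt (E * c)"
    then have a: "a > 0" using True by simp
    have "a \<le> (c / a * E + c / (c / a)) / 2" using h[of "c / a"] a c by simp
    then have "a \<le> a / 2" using True a c by simp
    then show False using a by simp
  qed
next
  case False
  then have Ep: "E > 0" using E by simp
  define t where "t = sqrt (c / E)"
  have tp: "t > 0" using Ep c by (simp add: t_def)
  have "t * E = sqrt (E * c)"
    using Ep c by (simp add: t_def real_sqrt_divide field_simps real_sqrt_mult)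
  moreover have "c / t = sqrt (E * c)"
    using Ep c by (simp add: t_def real_sqrt_divide field_simps real_sqrt_mult)
  ultimately show ?thesis using h[OF tp] by simp
qed

lemma set_int_nonneg:
  fixes f :: "real \<Rightarrow> real"
  shows "(\<And>s. s \<in> A \<Longrightarrow> 0 \<le> f s) \<Longrightarrow> 0 \<le> (LINT s:A|lborel. f s)"
  unfolding set_lebesgue_integral_def by (rule Bochner_Integration.integral_nonneg) (simp split: split_indicator)

lemma set_int_subset_le:
  fixes f :: "real \<Rightarrow> real"
  assumes "set_integrable lborel B f" "A \<subseteq> B" "A \<in> sets borel" "\<And>s. s \<in> B \<Longrightarrow> 0 \<le> f s"
  shows "(LINT s:A|lborel. f s) \<le> (LINT s:B|lborel. f s)"
proof -
  have iA: "set_integrable lborel A f" by (rule set_integrable_subset[OF assms(1)]) (use assms in auto)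
  show ?thesis unfolding set_lebesgue_integral_def
    using iA assms(1) unfolding set_integrable_def
    by (rule Bochner_Integration.integral_mono) (use assms in \<open>auto split: split_indicator\<close>)
qed

lemma KE:
  fixes u u' :: "real \<Rightarrow> real"
  assumes wd: "weak_deriv u u'" and w: "w > 0"
    and si: "set_integrable lborel {0..} (\<lambda>s. (u' s)\<^sup>2 * exp (w * s))"
    and xy: "0 \<le> x" "x \<le> y"
  shows "\<bar>u y - u x\<bar> \<le> sqrt ((LINT s:{0..}|lborel. (u' s)\<^sup>2 * exp (w * s)) * (exp (- w * x) / w))"
proof -
  define E where "E = (LINT s:{0..}|lborel. (u' s)\<^sup>2 * exp (w * s))"
  have E0: "E \<ge> 0" unfolding E_def by (rule set_int_nonneg) simp
  define A where "A = (LINT s:{x<..y}|lborel. (u' s)\<^sup>2 * exp (w * s))"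
  define B where "B = (LINT s:{x<..y}|lborel. exp (- w * s))"
  have AE: "A \<le> E" unfolding A_def E_def by (rule set_int_subset_le[OF si]) (use xy in auto)
  have Bb: "B \<le> exp (- w * x) / w" unfolding B_def by (rule exp_int_Ioc_le[OF w xy(2)])
  have siA: "set_integrable lborel {x<..y} (\<lambda>s. (u' s)\<^sup>2 * exp (w * s))"
    by (rule set_integrable_subset[OF si]) (use xy in auto)
  have siB: "set_integrable lborel {x<..y} (\<lambda>s. exp (- w * s))" by (rule exp_si_Ioc)
  have iu: "set_integrable lborel {x<..y} u'" using wd_int_sub(1)[OF wd xy] .
  show ?thesis unfolding E_def[symmetric]
  proof (rule opt_aux[OF E0])
    show "exp (- w * x) / w > 0" using w by simp
    fix t :: real assume t: "t > 0"
    have "\<bar>u y - u x\<bar> = \<bar>LINT s:{x<..y}|lborel. u' s\<bar>" using wd_split[OF wd xy] by simp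
    also have "\<dots> \<le> (LINT s:{x<..y}|lborel. \<bar>u' s\<bar>)"
      using set_integral_norm_bound[OF iu] by simp
    also have "\<dots> \<le> (LINT s:{x<..y}|lborel. (t / 2) * ((u' s)\<^sup>2 * exp (w * s)) + (1 / (2 * t)) * exp (- w * s))"
    proof (rule set_integral_mono)
      show "set_integrable lborel {x<..y} (\<lambda>s. \<bar>u' s\<bar>)" using set_integrable_abs[OF iu] .
      show "set_integrable lborel {x<..y} (\<lambda>s. (t / 2) * ((u' s)\<^sup>2 * exp (w * s)) + (1 / (2 * t)) * exp (- w * s))"
        using siA siB by (intro set_integral_add set_integrable_mult_right)
      fix s assume "s \<in> {x<..y}"
      have "\<bar>u' s\<bar> \<le> (t * (u' s)\<^sup>2 * exp (w * s) + (1 / exp (w * s)) / t) / 2"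
        by (rule amgm_aux[OF t]) simp
      also have "(1 / exp (w * s)) = exp (- w * s)" by (simp add: exp_minus field_simps)
      finally show "\<bar>u' s\<bar> \<le> (t / 2) * ((u' s)\<^sup>2 * exp (w * s)) + (1 / (2 * t)) * exp (- w * s)"
        using t by (simp add: field_simps)
    qed
    also have "\<dots> = (t / 2) * A + (1 / (2 * t)) * B"
      unfolding A_def B_def using siA siB by (simp add: set_integral_add set_integrable_mult_right)
    also have "\<dots> \<le> (t / 2) * E + (1 / (2 * t)) * (exp (- w * x) / w)"
      using AE Bb t by (intro add_mono mult_left_mono) auto
    also have "\<dots> = (t * E + exp (- w * x) / w / t) / 2" using t by (simp add: field_simps)
    finally show "\<bar>u y - u x\<bar> \<le> (t * E + exp (- w * x) / w / t) / 2" .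
  qed
qed

lemma KE_lim:
  fixes u u' :: "real \<Rightarrow> real"
  assumes wd: "weak_deriv u u'" and w: "w > 0"
    and si: "set_integrable lborel {0..} (\<lambda>s. (u' s)\<^sup>2 * exp (w * s))"
    and lim: "(u \<longlongrightarrow> L) at_top" and x: "0 \<le> x"
  shows "\<bar>L - u x\<bar> \<le> sqrt ((LINT s:{0..}|lborel. (u' s)\<^sup>2 * exp (w * s)) * (exp (- w * x) / w))"
proof (rule tendsto_upperbound)
  show "((\<lambda>y. \<bar>u y - u x\<bar>) \<longlongrightarrow> \<bar>L - u x\<bar>) at_top"
    by (intro tendsto_intros lim)
  show "\<forall>\<^sub>F y in at_top. \<bar>u y - u x\<bar> \<le> sqrt ((LINT s:{0..}|lborel. (u' s)\<^sup>2 * exp (w * s)) * (exp (- w * x) / w))"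
    using eventually_ge_at_top[of x] by eventually_elim (rule KE[OF wd w si x])
qed simp

lemma ind_sq_exp:
  "indicator A s *\<^sub>R ((g s)\<^sup>2 * exp (w * s)) = (indicator A s * g s)\<^sup>2 * exp (w * s :: real)"
  by (simp split: split_indicator)

lemma wd_AE_si:
  assumes wg: "weak_deriv f g" and wh: "weak_deriv f h"
    and sg: "set_integrable lborel {0..} (\<lambda>s. (g s)\<^sup>2 * exp (w * s))"
  shows "set_integrable lborel {0..} (\<lambda>s. (h s)\<^sup>2 * exp (w * s))"
    "(LINT s:{0..}|lborel. (h s)\<^sup>2 * exp (w * s)) = (LINT s:{0..}|lborel. (g s)\<^sup>2 * exp (w * s))"
proof -
  have mg[measurable]: "(\<lambda>x. indicator {0..} x * g x) \<in> borel_measurable borel" by (rule wd_meas[OF wg])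
  have mh[measurable]: "(\<lambda>x. indicator {0..} x * h x) \<in> borel_measurable borel" by (rule wd_meas[OF wh])
  have ae: "AE s in lborel. (indicator {0..} s * g s)\<^sup>2 * exp (w * s) = (indicator {0..} s * h s)\<^sup>2 * exp (w * s)"
    using wd_AE_unique[OF wg wh] by eventually_elim (simp split: split_indicator)
  have m1: "(\<lambda>s. (indicator {0..} s * g s)\<^sup>2 * exp (w * s)) \<in> borel_measurable lborel" by measurable
  have m2: "(\<lambda>s. (indicator {0..} s * h s)\<^sup>2 * exp (w * s)) \<in> borel_measurable lborel" by measurable
  show "set_integrable lborel {0..} (\<lambda>s. (h s)\<^sup>2 * exp (w * s))"
    using sg unfolding set_integrable_def ind_sq_exp
    using integrable_cong_AE[OF m1 m2 ae] by simp
  show "(LINT s:{0..}|lborel. (h s)\<^sup>2 * exp (w * s)) = (LINT s:{0..}|lborel. (g s)\<^sup>2 * exp (w * s))"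
    unfolding set_lebesgue_integral_def ind_sq_exp
    using integral_cong_AE[OF m1 m2 ae] by simp
qed

lemma Ader_wd:
  assumes "inH w g"
  shows "weak_deriv g (Ader w g)"
proof -
  obtain h where h: "weak_deriv g h" using assms unfolding inH_def by blast
  show ?thesis
  proof (cases "\<exists>h. weak_deriv g h \<and> inH w h")
    case True then show ?thesis unfolding Ader_def using someI_ex[OF True] by simp
  next
    case False
    have "weak_deriv g (SOME h. weak_deriv g h)" using someI_ex[of "\<lambda>h. weak_deriv g h"] h by blast
    then show ?thesis unfolding Ader_def if_not_P[OF False] .
  qed
qed

lemma Ader_si:
  assumes "inH w g"
  shows "set_integrable lborel {0..} (\<lambda>s. (Ader w g s)\<^sup>2 * exp (w * s))"
proof -
  obtain h where h: "weak_deriv g h" "set_integrable lborel {0..} (\<lambda>x. (h x)\<^sup>2 * exp (w * x))"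
    using assms unfolding inH_def by blast
  show ?thesis by (rule wd_AE_si(1)[OF h(1) Ader_wd[OF assms] h(2)])
qed

lemma inH_lim:
  assumes "inH w g"
  shows "(g \<longlongrightarrow> at_infty g) at_top"
proof -
  obtain L where L: "(g \<longlongrightarrow> L) at_top" using assms unfolding inH_def by blast
  then have "at_infty g = L" unfolding at_infty_def by (intro tendsto_Lim) auto
  then show ?thesis using L by simp
qed

lemma Hnorm2_parts:
  assumes "inH w g"
  shows "(at_infty g)\<^sup>2 \<le> Hnorm2 w g" "(LINT s:{0..}|lborel. (Ader w g s)\<^sup>2 * exp (w * s)) \<le> Hnorm2 w g"
    "0 \<le> (LINT s:{0..}|lborel. (Ader w g s)\<^sup>2 * exp (w * s))" "0 \<le> Hnorm2 w g"
proof -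
  have "0 \<le> (LINT s:{0..}|lborel. (Ader w g s)\<^sup>2 * exp (w * s))" by (rule set_int_nonneg) simp
  then show "(at_infty g)\<^sup>2 \<le> Hnorm2 w g" "(LINT s:{0..}|lborel. (Ader w g s)\<^sup>2 * exp (w * s)) \<le> Hnorm2 w g"
    "0 \<le> (LINT s:{0..}|lborel. (Ader w g s)\<^sup>2 * exp (w * s))" "0 \<le> Hnorm2 w g"
    unfolding Hnorm2_def by auto
qed

lemma sqrt_exp_half: "sqrt (exp (- w * x)) = exp (- (w / 2) * x)"
proof -
  have "exp (- w * x) = (exp (- (w / 2) * x))\<^sup>2"
    by (simp add: power2_eq_square exp_add[symmetric])
  then show ?thesis by simp
qed

lemma inH_bound:
  assumes g: "inH w g" and w: "w > 0" and x: "0 \<le> x"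
  shows "\<bar>g x\<bar> \<le> (1 + 1 / sqrt w) * sqrt (Hnorm2 w g)"
proof -
  define E where "E = (LINT s:{0..}|lborel. (Ader w g s)\<^sup>2 * exp (w * s))"
  note hp = Hnorm2_parts[OF g]
  have k: "\<bar>at_infty g - g x\<bar> \<le> sqrt (E * (exp (- w * x) / w))"
    unfolding E_def by (rule KE_lim[OF Ader_wd[OF g] w Ader_si[OF g] inH_lim[OF g] x])
  have "E * (exp (- w * x) / w) \<le> Hnorm2 w g / w"
  proof -
    have "exp (- w * x) \<le> 1" using w x by simp
    then have "E * exp (- w * x) \<le> Hnorm2 w g * 1"
      using hp(2,3) unfolding E_def by (intro mult_mono) auto
    then show ?thesis using w by (simp add: divide_right_mono)
  qed
  then have "sqrt (E * (exp (- w * x) / w)) \<le> sqrt (Hnorm2 w g) / sqrt w"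
    by (metis real_sqrt_divide real_sqrt_le_iff)
  moreover have "\<bar>at_infty g\<bar> \<le> sqrt (Hnorm2 w g)"
    using hp(1) real_sqrt_le_mono by fastforce
  ultimately show ?thesis using k by (simp add: algebra_simps)
qed

lemma inH_decay:
  assumes g: "inH w g" and w: "w > 0" and x: "0 \<le> x" and lim: "(g \<longlongrightarrow> 0) at_top"
  shows "\<bar>g x\<bar> \<le> sqrt (Hnorm2 w g / w) * exp (- (w / 2) * x)"
proof -
  define E where "E = (LINT s:{0..}|lborel. (Ader w g s)\<^sup>2 * exp (w * s))"
  note hp = Hnorm2_parts[OF g]
  have k: "\<bar>0 - g x\<bar> \<le> sqrt (E * (exp (- w * x) / w))"
    unfolding E_def by (rule KE_lim[OF Ader_wd[OF g] w Ader_si[OF g] lim x])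
  have "E * (exp (- w * x) / w) \<le> (Hnorm2 w g / w) * exp (- w * x)"
    using hp(2) w unfolding E_def by (simp add: field_simps)
  then have s: "sqrt (E * (exp (- w * x) / w)) \<le> sqrt (Hnorm2 w g / w) * sqrt (exp (- w * x))"
    by (metis real_sqrt_le_mono real_sqrt_mult)
  from k have k': "\<bar>g x\<bar> \<le> sqrt (E * (exp (- w * x) / w))" by simp
  have "\<bar>g x\<bar> \<le> sqrt (Hnorm2 w g / w) * sqrt (exp (- w * x))" using k' s by linarith
  also have "sqrt (exp (- w * x)) = exp (- (w / 2) * x)" by (rule sqrt_exp_half)
  finally show ?thesis .
qed

lemma inH_transfer:
  assumes "inH w g" "\<And>x. 0 \<le> x \<Longrightarrow> g' x = g x"
  shows "inH w g'"
proof -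
  obtain h L where h: "weak_deriv g h" "set_integrable lborel {0..} (\<lambda>x. (h x)\<^sup>2 * exp (w * x))"
    and L: "(g \<longlongrightarrow> L) at_top" using assms(1) unfolding inH_def by blast
  have "weak_deriv g' h" by (rule wd_local[OF h(1)]) (use assms(2) in auto)
  moreover have "(g' \<longlongrightarrow> L) at_top"
  proof -
    have ev: "\<forall>\<^sub>F x in at_top. g x = g' x"
      using eventually_ge_at_top[of "0::real"] by (rule eventually_mono) (simp add: assms(2))
    show ?thesis using tendsto_cong[OF ev] L by simp
  qed
  ultimately show ?thesis using h(2) unfolding inH_def by blast
qed

lemma Hnorm2_upper:
  assumes g: "inH w g" and q: "weak_deriv g q" and sq: "set_integrable lborel {0..} (\<lambda>s. (q s)\<^sup>2 * exp (w * s))"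
    and B: "\<And>x. 0 \<le> x \<Longrightarrow> \<bar>g x\<bar> \<le> B"
    and Eb: "(LINT s:{0..}|lborel. (q s)\<^sup>2 * exp (w * s)) \<le> Eb"
  shows "Hnorm2 w g \<le> B\<^sup>2 + Eb"
proof -
  have "\<bar>at_infty g\<bar> \<le> B"
  proof (rule tendsto_upperbound)
    show "((\<lambda>x. \<bar>g x\<bar>) \<longlongrightarrow> \<bar>at_infty g\<bar>) at_top" by (intro tendsto_intros inH_lim[OF g])
    show "\<forall>\<^sub>F x in at_top. \<bar>g x\<bar> \<le> B" using eventually_ge_at_top[of 0] by eventually_elim (rule B)
  qed simp
  then have "(at_infty g)\<^sup>2 \<le> B\<^sup>2" by (meson abs_ge_zero order_trans power2_le_iff_abs_le)
  moreover have "(LINT s:{0..}|lborel. (Ader w g s)\<^sup>2 * exp (w * s)) = (LINT s:{0..}|lborel. (q s)\<^sup>2 * exp (w * s))"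
    by (rule wd_AE_si(2)[OF q Ader_wd[OF g] sq])
  ultimately show ?thesis using Eb unfolding Hnorm2_def by simp
qed

lemma Ader_eq_cont:
  assumes g: "inH w g" and q: "weak_deriv g q" and qH: "inH w q" and x: "0 \<le> x"
  shows "Ader w g x = q x"
proof -
  have ex: "\<exists>h. weak_deriv g h \<and> inH w h" using q qH by blast
  then have a: "weak_deriv g (Ader w g) \<and> inH w (Ader w g)"
    unfolding Ader_def using someI_ex[OF ex] by simp
  have c1: "continuous_on {0..} (Ader w g)" using a Ader_wd wd_cont by blast
  have c2: "continuous_on {0..} q" using qH Ader_wd wd_cont by blast
  show ?thesis by (rule AE_cont_unique[OF c1 c2 wd_AE_unique[OF conjunct1[OF a] q] x])
qed

locale fs =
  fixes w :: real and m :: nat and f :: "real \<Rightarrow> real"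
  assumes w: "w > 0" and D: "inD w m f" and lim0: "(f \<longlongrightarrow> 0) at_top"
begin

abbreviation fk :: "nat \<Rightarrow> real \<Rightarrow> real" where "fk k \<equiv> A0pow w k f"

definition S where "S = (\<Sum>j\<le>m. Hnorm2 w (fk j))"
definition \<beta> where "\<beta> = 1 + 1 / sqrt w"
definition K where "K = 2 / (w * sqrt w)"

lemma inH_k: "k \<le> m \<Longrightarrow> inH w (fk k)"
  using D unfolding inD_def by blast

lemma wd_k: "k \<le> m \<Longrightarrow> weak_deriv (fk k) (fk (Suc k))"
  using Ader_wd[OF inH_k] by simp

lemma si_k: "k \<le> m \<Longrightarrow> set_integrable lborel {0..} (\<lambda>s. (fk (Suc k) s)\<^sup>2 * exp (w * s))"
  using Ader_si[OF inH_k] by simp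

lemma H_nonneg: "k \<le> m \<Longrightarrow> 0 \<le> Hnorm2 w (fk k)"
  using Hnorm2_parts(4)[OF inH_k] .

lemma S_nonneg: "0 \<le> S"
  unfolding S_def by (intro sum_nonneg H_nonneg) auto

lemma H_le_S: "k \<le> m \<Longrightarrow> Hnorm2 w (fk k) \<le> S"
  unfolding S_def by (rule member_le_sum) (auto intro: H_nonneg)

lemma E_le_S: "k \<le> m \<Longrightarrow> (LINT s:{0..}|lborel. (fk (Suc k) s)\<^sup>2 * exp (w * s)) \<le> S"
  using Hnorm2_parts(2)[OF inH_k, of k] H_le_S[of k] by simp

lemma beta_pos: "\<beta> > 0" using w by (simp add: \<beta>_def add_pos_nonneg)

lemma bnd_k: "k \<le> m \<Longrightarrow> 0 \<le> x \<Longrightarrow> \<bar>fk k x\<bar> \<le> \<beta> * sqrt S"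
proof -
  assume k: "k \<le> m" and x: "0 \<le> x"
  have "\<bar>fk k x\<bar> \<le> \<beta> * sqrt (Hnorm2 w (fk k))"
    unfolding \<beta>_def by (rule inH_bound[OF inH_k[OF k] w x])
  also have "\<dots> \<le> \<beta> * sqrt S"
    using H_le_S[OF k] beta_pos by (intro mult_left_mono) auto
  finally show ?thesis .
qed

lemma decay: "0 \<le> x \<Longrightarrow> \<bar>f x\<bar> \<le> sqrt (S / w) * exp (- (w / 2) * x)"
proof -
  assume x: "0 \<le> x"
  have "\<bar>fk 0 x\<bar> \<le> sqrt (Hnorm2 w (fk 0) / w) * exp (- (w / 2) * x)"
    by (rule inH_decay[OF inH_k w x]) (use lim0 in auto)
  also have "\<dots> \<le> sqrt (S / w) * exp (- (w / 2) * x)"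
    using H_le_S[of 0] w by (intro mult_right_mono real_sqrt_le_mono divide_right_mono) auto
  finally show ?thesis by simp
qed

lemma f0sq: "0 \<le> x \<Longrightarrow> (f x)\<^sup>2 \<le> (S / w) * exp (- w * x)"
proof -
  assume x: "0 \<le> x"
  have "(f x)\<^sup>2 \<le> (sqrt (S / w) * exp (- (w / 2) * x))\<^sup>2"
    using decay[OF x] by (meson abs_ge_zero order_trans power2_le_iff_abs_le)
  also have "\<dots> = (sqrt (S / w))\<^sup>2 * (exp (- (w / 2) * x))\<^sup>2" by (simp only: power_mult_distrib)
  also have "(sqrt (S / w))\<^sup>2 = S / w" using S_nonneg w by simp
  also have "(exp (- (w / 2) * x))\<^sup>2 = exp (- w * x)" by (simp add: power2_eq_square exp_add[symmetric])
  finally show ?thesis .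
qed

lemma cont_k: "k \<le> m \<Longrightarrow> continuous_on {0..} (fk k)"
  using wd_cont[OF wd_k] .

definition I where "I = Iop f"

lemma wdI: "weak_deriv I f"
  unfolding weak_deriv_def
proof (intro allI impI conjI)
  fix x :: real assume x: "0 \<le> x"
  have "continuous_on {0..x} f" using cont_k[of 0] by (simp add: continuous_on_subset)
  then show "set_integrable lborel {0..x} f" by (rule borel_integrable_atLeastAtMost')
  have "I 0 = 0" unfolding I_def Iop_def
    using point_null_int[where s=0 and x=0 and g=f] by (simp add: set_lebesgue_integral_def)
  then show "I x = I 0 + (LINT y:{0..x}|lborel. f y)" by (simp add: I_def Iop_def)
qed

lemma K_pos: "K > 0" using w by (simp add: K_def)

lemma I_bound: "0 \<le> x \<Longrightarrow> \<bar>I x\<bar> \<le> K * sqrt S"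
proof -
  assume x: "0 \<le> x"
  have sif: "set_integrable lborel {0..x} f" using wd_int[OF wdI x] .
  have "\<bar>I x\<bar> = \<bar>LINT y:{0<..x}|lborel. f y\<bar>" unfolding I_def Iop_def by (simp add: point_null_int)
  also have "\<dots> \<le> (LINT y:{0<..x}|lborel. \<bar>f y\<bar>)"
  proof -
    have "set_integrable lborel {0<..x} f" by (rule set_integrable_subset[OF sif]) auto
    from set_integral_norm_bound[OF this] show ?thesis by simp
  qed
  also have "\<dots> \<le> (LINT y:{0<..x}|lborel. sqrt (S / w) * exp (- (w / 2) * y))"
  proof (rule set_integral_mono)
    show "set_integrable lborel {0<..x} (\<lambda>y. \<bar>f y\<bar>)"
      by (rule set_integrable_abs, rule set_integrable_subset[OF sif]) auto
    show "set_integrable lborel {0<..x} (\<lambda>y. sqrt (S / w) * exp (- (w / 2) * y))"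
      using exp_si_Ioc by (rule set_integrable_mult_right)
    fix y assume "y \<in> {0<..x}"
    then show "\<bar>f y\<bar> \<le> sqrt (S / w) * exp (- (w / 2) * y)" by (intro decay) auto
  qed
  also have "\<dots> = sqrt (S / w) * (LINT y:{0<..x}|lborel. exp (- (w / 2) * y))" by simp
  also have "\<dots> \<le> sqrt (S / w) * (exp (- (w / 2) * 0) / (w / 2))"
    using w x S_nonneg by (intro mult_left_mono exp_int_Ioc_le) auto
  also have "\<dots> = K * sqrt S"
    using w by (simp add: K_def real_sqrt_divide field_simps)
  finally show ?thesis .
qed

lemma f_si: "set_integrable lborel {0..} f"
proof (rule set_integrable_bound)
  show "set_integrable lborel {0..} (\<lambda>y. sqrt (S / w) * exp (- (w / 2) * y))"
    using exp_si_atLeast[of "w / 2"] w by (intro set_integrable_mult_right) auto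
  show "set_borel_measurable lborel {0..} f"
    unfolding set_borel_measurable_def using wd_meas[OF wdI] by simp
  show "AE x in lborel. x \<in> {0..} \<longrightarrow> norm (f x) \<le> norm (sqrt (S / w) * exp (- (w / 2) * x))"
  proof (intro AE_I2 impI)
    fix x :: real assume "x \<in> {0..}"
    then have "\<bar>f x\<bar> \<le> sqrt (S / w) * exp (- (w / 2) * x)" by (intro decay) auto
    moreover have "0 \<le> sqrt (S / w) * exp (- (w / 2) * x)" using S_nonneg w by simp
    ultimately show "norm (f x) \<le> norm (sqrt (S / w) * exp (- (w / 2) * x))" by simp
  qed
qed

lemma I_lim: "(I \<longlongrightarrow> (LINT y:{0..}|lborel. f y)) at_top"
  unfolding I_def Iop_def by (rule tendsto_set_lebesgue_integral_at_top[OF _ f_si]) auto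

lemma meas_k: "k \<le> Suc m \<Longrightarrow> (\<lambda>x. indicator {0..} x * fk k x) \<in> borel_measurable borel"
proof (cases k)
  case 0 then show ?thesis using wd_meas[OF wdI] by simp
next
  case (Suc j)
  assume "k \<le> Suc m"
  then show ?thesis using wd_meas[OF wd_k[of j]] Suc by simp
qed

lemma meas_I: "(\<lambda>x. indicator {0..} x * I x) \<in> borel_measurable borel"
  using borel_measurable_continuous_on_indicator[OF _ wd_cont[OF wdI]] by simp

end

fun cf :: "nat \<Rightarrow> nat \<Rightarrow> real" where
  "cf 0 a = 0"
| "cf (Suc j) a = cf j a + (if a = 0 then 0 else cf j (a - 1)) + (if a = j then 1 else 0)"

lemma cf_nonneg: "cf j a \<ge> 0"
  by (induction j arbitrary: a) auto

lemma cf_zero: "j \<le> a \<Longrightarrow> cf j a = 0"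
  by (induction j arbitrary: a) auto

definition Rf :: "(nat \<Rightarrow> real \<Rightarrow> real) \<Rightarrow> nat \<Rightarrow> real \<Rightarrow> real" where
  "Rf F j x = (\<Sum>a<j. cf j a * (F a x * F (j - 1 - a) x))"

definition Rd :: "(nat \<Rightarrow> real \<Rightarrow> real) \<Rightarrow> nat \<Rightarrow> real \<Rightarrow> real" where
  "Rd F j x = (\<Sum>a<j. cf j a * (F (Suc a) x * F (j - 1 - a) x + F a x * F (Suc (j - 1 - a)) x))"

lemma Rf_step: "F j x * F 0 x + Rd F j x = Rf F (Suc j) x"
proof -
  define G where "G a = F a x * F (j - a) x" for a
  have "Rf F (Suc j) x = (\<Sum>a<Suc j. cf j a * G a) + (\<Sum>a<Suc j. (if a = 0 then 0 else cf j (a - 1)) * G a)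
        + (\<Sum>a<Suc j. (if a = j then 1 else 0) * G a)"
    unfolding Rf_def G_def by (simp add: sum.distrib algebra_simps)
  also have "(\<Sum>a<Suc j. cf j a * G a) = (\<Sum>a<j. cf j a * G a)"
    by (simp add: cf_zero)
  also have "(\<Sum>a<Suc j. (if a = 0 then 0 else cf j (a - 1)) * G a) = (\<Sum>a<j. cf j a * G (Suc a))"
    by (subst sum.lessThan_Suc_shift) simp
  also have "(\<Sum>a<Suc j. (if a = j then 1 else 0) * G a) = G j"
  proof -
    have "(\<Sum>a<Suc j. (if a = j then 1 else 0) * G a) = (\<Sum>a<Suc j. if a = j then G a else 0)"
      by (rule sum.cong) auto
    also have "\<dots> = G j" by (simp add: sum.delta)
    finally show ?thesis .
  qed
  finally have 1: "Rf F (Suc j) x = (\<Sum>a<j. cf j a * G a) + (\<Sum>a<j. cf j a * G (Suc a)) + G j" .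
  have 2: "Rd F j x = (\<Sum>a<j. cf j a * G (Suc a)) + (\<Sum>a<j. cf j a * G a)"
    unfolding Rd_def G_def sum.distrib[symmetric]
  proof (rule sum.cong[OF refl])
    fix a assume "a \<in> {..<j}"
    then have e1: "j - 1 - a = j - Suc a" and e2: "Suc (j - 1 - a) = j - a" by auto
    show "cf j a * (F (Suc a) x * F (j - 1 - a) x + F a x * F (Suc (j - 1 - a)) x) =
          cf j a * (F (Suc a) x * F (j - Suc a) x) + cf j a * (F a x * F (j - a) x)"
      unfolding e1[symmetric] e2 by (simp add: algebra_simps)
  qed
  show ?thesis using 1 2 by (simp add: G_def)
qed


declare cf.simps(2) [simp del]

definition Cc :: "nat \<Rightarrow> real" where "Cc m = (\<Sum>j\<le>Suc m. \<Sum>a<j. cf j a)"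

lemma Cc_nonneg: "0 \<le> Cc m" unfolding Cc_def by (intro sum_nonneg) (simp add: cf_nonneg)

lemma C_le: "j \<le> Suc m \<Longrightarrow> (\<Sum>a<j. cf j a) \<le> Cc m"
  unfolding Cc_def by (rule member_le_sum) (auto intro: sum_nonneg cf_nonneg)

context fs
begin

definition Q :: "nat \<Rightarrow> real \<Rightarrow> real" where "Q j x = fk j x * I x + Rf fk j x"

definition \<gamma> where "\<gamma> = \<beta>\<^sup>2 + 1 / w"

lemma wd_pair: "a \<le> m \<Longrightarrow> b \<le> m \<Longrightarrow>
  weak_deriv (\<lambda>x. fk a x * fk b x) (\<lambda>x. fk (Suc a) x * fk b x + fk a x * fk (Suc b) x)"
  by (rule wd_mult[OF wd_k wd_k])

lemma wd_R: "j \<le> m \<Longrightarrow> weak_deriv (Rf fk j) (Rd fk j)"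
proof -
  assume j: "j \<le> m"
  have "weak_deriv (\<lambda>x. \<Sum>a\<in>{..<j}. cf j a * (fk a x * fk (j - 1 - a) x))
     (\<lambda>x. \<Sum>a\<in>{..<j}. cf j a * (fk (Suc a) x * fk (j - 1 - a) x + fk a x * fk (Suc (j - 1 - a)) x))"
  proof (rule wd_sum)
    fix a assume "a \<in> {..<j}"
    then have "a \<le> m" "j - 1 - a \<le> m" using j by auto
    then show "weak_deriv (\<lambda>x. cf j a * (fk a x * fk (j - 1 - a) x))
      (\<lambda>x. cf j a * (fk (Suc a) x * fk (j - 1 - a) x + fk a x * fk (Suc (j - 1 - a)) x))"
      by (intro wd_cmult wd_pair)
  qed
  moreover have "Rf fk j = (\<lambda>x. \<Sum>a\<in>{..<j}. cf j a * (fk a x * fk (j - 1 - a) x))"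
    by (rule ext) (simp add: Rf_def)
  moreover have "Rd fk j = (\<lambda>x. \<Sum>a\<in>{..<j}. cf j a * (fk (Suc a) x * fk (j - 1 - a) x + fk a x * fk (Suc (j - 1 - a)) x))"
    by (rule ext) (simp add: Rd_def)
  ultimately show ?thesis by simp
qed

lemma wd_Q: "j \<le> m \<Longrightarrow> weak_deriv (Q j) (Q (Suc j))"
proof -
  assume j: "j \<le> m"
  have "weak_deriv (\<lambda>x. fk j x * I x + Rf fk j x) (\<lambda>x. (fk (Suc j) x * I x + fk j x * f x) + Rd fk j x)"
    by (intro wd_add wd_mult wd_k[OF j] wdI wd_R[OF j])
  then show ?thesis
  proof (rule wd_local)
    fix x :: real
    show "Q j x = fk j x * I x + Rf fk j x" by (simp add: Q_def)
    have "fk j x * fk 0 x + Rd fk j x = Rf fk (Suc j) x" by (rule Rf_step)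
    then show "Q (Suc j) x = fk (Suc j) x * I x + fk j x * f x + Rd fk j x"
      by (simp add: Q_def)
  qed
qed

lemma R_bound: "j \<le> m \<Longrightarrow> 0 \<le> x \<Longrightarrow> \<bar>Rf fk j x\<bar> \<le> Cc m * \<beta>\<^sup>2 * S"
proof -
  assume j: "j \<le> m" and x: "0 \<le> x"
  have "\<bar>Rf fk j x\<bar> \<le> (\<Sum>a<j. \<bar>cf j a * (fk a x * fk (j - 1 - a) x)\<bar>)"
    unfolding Rf_def by (rule sum_abs)
  also have "\<dots> \<le> (\<Sum>a<j. cf j a * (\<beta>\<^sup>2 * S))"
  proof (rule sum_mono)
    fix a assume "a \<in> {..<j}"
    then have a: "a \<le> m" "j - 1 - a \<le> m" using j by auto
    have "\<bar>fk a x * fk (j - 1 - a) x\<bar> \<le> (\<beta> * sqrt S) * (\<beta> * sqrt S)"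
      unfolding abs_mult by (intro mult_mono bnd_k a x) (use beta_pos S_nonneg in auto)
    also have "\<dots> = \<beta>\<^sup>2 * S" using S_nonneg by (simp add: power2_eq_square)
    finally show "\<bar>cf j a * (fk a x * fk (j - 1 - a) x)\<bar> \<le> cf j a * (\<beta>\<^sup>2 * S)"
      unfolding abs_mult using cf_nonneg[of j a] by (simp add: mult_left_mono)
  qed
  also have "\<dots> = (\<Sum>a<j. cf j a) * (\<beta>\<^sup>2 * S)" by (simp add: sum_distrib_right)
  also have "\<dots> \<le> Cc m * (\<beta>\<^sup>2 * S)"
    using C_le[of j m] j S_nonneg by (intro mult_right_mono) auto
  finally show ?thesis by (simp add: mult_ac)
qed

lemma Q_bound: "j \<le> m \<Longrightarrow> 0 \<le> x \<Longrightarrow> \<bar>Q j x\<bar> \<le> (\<beta> * K + Cc m * \<beta>\<^sup>2) * S"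
proof -
  assume j: "j \<le> m" and x: "0 \<le> x"
  have "\<bar>fk j x * I x\<bar> \<le> (\<beta> * sqrt S) * (K * sqrt S)"
    unfolding abs_mult by (intro mult_mono bnd_k I_bound j x) (use beta_pos S_nonneg in auto)
  also have "\<dots> = \<beta> * K * S" using S_nonneg by (simp add: algebra_simps)
  finally have "\<bar>fk j x * I x\<bar> \<le> \<beta> * K * S" .
  then show ?thesis using R_bound[OF j x] unfolding Q_def by (simp add: algebra_simps)
qed

end

lemma sq_le_of_abs: "\<bar>y::real\<bar> \<le> c \<Longrightarrow> y\<^sup>2 \<le> c\<^sup>2"
  by (metis abs_ge_zero power2_abs power_mono)

lemma si_sum:
  fixes f :: "'i \<Rightarrow> real \<Rightarrow> real"
  assumes "finite A" "\<And>i. i \<in> A \<Longrightarrow> set_integrable lborel X (f i)"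
  shows "set_integrable lborel X (\<lambda>x. \<Sum>i\<in>A. f i x) \<and>
         (LINT x:X|lborel. (\<Sum>i\<in>A. f i x)) = (\<Sum>i\<in>A. LINT x:X|lborel. f i x)"
  using assms
proof (induction A rule: finite_induct)
  case empty then show ?case by (simp add: set_integrable_def)
next
  case (insert a A)
  then have ia: "set_integrable lborel X (f a)" and iA: "set_integrable lborel X (\<lambda>x. \<Sum>i\<in>A. f i x)"
    and eA: "(LINT x:X|lborel. (\<Sum>i\<in>A. f i x)) = (\<Sum>i\<in>A. LINT x:X|lborel. f i x)" by auto
  have "set_integrable lborel X (\<lambda>x. f a x + (\<Sum>i\<in>A. f i x))" using ia iA by (rule set_integral_add)
  moreover have "(LINT x:X|lborel. f a x + (\<Sum>i\<in>A. f i x)) = (LINT x:X|lborel. f a x) + (LINT x:X|lborel. (\<Sum>i\<in>A. f i x))"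
    using ia iA by (rule set_integral_add)
  ultimately show ?case using insert(1,2) eA by simp
qed

lemma exp_int_atLeast_le:
  fixes c :: real assumes c: "c > 0"
  shows "(LINT s:{0..}|lborel. exp (- c * s)) \<le> 1 / c"
proof (rule tendsto_upperbound)
  show "((\<lambda>b. LINT s:{0..b}|lborel. exp (- c * s)) \<longlongrightarrow> (LINT s:{0..}|lborel. exp (- c * s))) at_top"
    by (rule tendsto_set_lebesgue_integral_at_top[OF _ exp_si_atLeast[OF c]]) auto
  show "\<forall>\<^sub>F b in at_top. (LINT s:{0..b}|lborel. exp (- c * s)) \<le> 1 / c"
    using eventually_ge_at_top[of "0::real"]
  proof eventually_elim
    case (elim b)
    have "(LINT s:{0..b}|lborel. exp (- c * s)) = (LINT s:{0<..b}|lborel. exp (- c * s))"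
      by (rule point_null_int)
    also have "\<dots> \<le> exp (- c * 0) / c" by (rule exp_int_Ioc_le[OF c elim])
    finally show ?case by simp
  qed
qed simp

definition N0 :: "real \<Rightarrow> nat \<Rightarrow> real" where
  "N0 w m = sqrt (real (Suc m) * (((1 + 1 / sqrt w) * (2 / (w * sqrt w)) + Cc m * (1 + 1 / sqrt w)\<^sup>2)\<^sup>2
     + (2 / (w * sqrt w) + Cc m * sqrt ((1 + 1 / sqrt w)\<^sup>2 + 1 / w))\<^sup>2 * (real (Suc m) + 1 / w\<^sup>2)))"

context fs
begin

definition gg where "gg x = (\<Sum>k\<in>{Suc 0..Suc m}. (fk k x)\<^sup>2) + (S / w) * exp (- (2 * w) * x)"

lemma gg_parts: "0 \<le> (\<Sum>k\<in>{Suc 0..Suc m}. (fk k x)\<^sup>2)" "0 \<le> (S / w) * exp (- (2 * w) * x)"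
proof -
  show "0 \<le> (\<Sum>k\<in>{Suc 0..Suc m}. (fk k x)\<^sup>2)" by (intro sum_nonneg) simp
  show "0 \<le> (S / w) * exp (- (2 * w) * x)" using S_nonneg w by simp
qed

lemma gg_k: "1 \<le> k \<Longrightarrow> k \<le> Suc m \<Longrightarrow> (fk k x)\<^sup>2 \<le> gg x"
proof -
  assume "1 \<le> k" "k \<le> Suc m"
  then have "(fk k x)\<^sup>2 \<le> (\<Sum>k\<in>{Suc 0..Suc m}. (fk k x)\<^sup>2)" by (intro member_le_sum) auto
  then show ?thesis unfolding gg_def using gg_parts(2)[of x] by linarith
qed

lemma gg_e: "(S / w) * exp (- (2 * w) * x) \<le> gg x"
  unfolding gg_def using gg_parts(1)[of x] by linarith

lemma gg_nonneg: "0 \<le> gg x"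
  using gg_e[of x] gg_parts(2)[of x] by linarith

lemma gamma_ge: "\<beta>\<^sup>2 \<le> \<gamma>" "1 / w \<le> \<gamma>" "0 \<le> \<gamma>"
  using w by (auto simp: \<gamma>_def)

lemma pair_bound:
  assumes ab: "a + b \<le> m" and x: "0 \<le> x"
  shows "(fk a x * fk b x)\<^sup>2 \<le> \<gamma> * S * gg x"
proof -
  have gen: "(fk c x * fk d x)\<^sup>2 \<le> \<gamma> * S * gg x" if "c \<le> m" "1 \<le> d" "d \<le> m" for c d
  proof -
    have "(fk c x)\<^sup>2 \<le> (\<beta> * sqrt S)\<^sup>2" by (rule sq_le_of_abs[OF bnd_k[OF that(1) x]])
    also have "\<dots> = \<beta>\<^sup>2 * S" using S_nonneg by (simp add: power_mult_distrib)
    finally have 1: "(fk c x)\<^sup>2 \<le> \<beta>\<^sup>2 * S" .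
    have 2: "(fk d x)\<^sup>2 \<le> gg x" using gg_k[of d x] that by simp
    have "(fk c x * fk d x)\<^sup>2 = (fk c x)\<^sup>2 * (fk d x)\<^sup>2" by (simp add: power_mult_distrib)
    also have "\<dots> \<le> (\<beta>\<^sup>2 * S) * gg x" using 1 2 by (intro mult_mono) (auto simp: S_nonneg)
    also have "\<dots> \<le> \<gamma> * S * gg x"
      using gamma_ge(1) S_nonneg gg_nonneg[of x] by (intro mult_right_mono) auto
    finally show ?thesis .
  qed
  show ?thesis
  proof (cases "1 \<le> b")
    case True then show ?thesis using gen[of a b] ab by simp
  next
    case b0: False
    show ?thesis
    proof (cases "1 \<le> a")
      case True
      then have "(fk b x * fk a x)\<^sup>2 \<le> \<gamma> * S * gg x" using gen[of b a] ab by simp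
      then show ?thesis by (simp add: mult.commute)
    next
      case False
      then have a0: "a = 0" "b = 0" using b0 by auto
      have fs: "(f x)\<^sup>2 \<le> (S / w) * exp (- w * x)" by (rule f0sq[OF x])
      have "(f x * f x)\<^sup>2 = ((f x)\<^sup>2)\<^sup>2" by (simp add: power2_eq_square)
      also have "\<dots> \<le> ((S / w) * exp (- w * x))\<^sup>2" by (rule power_mono[OF fs]) simp
      also have "\<dots> = (1 / w) * S * ((S / w) * exp (- (2 * w) * x))"
        using w by (simp add: power2_eq_square exp_add[symmetric] field_simps)
      also have "\<dots> \<le> \<gamma> * S * gg x"
        using gamma_ge(2,3) gg_e[of x] S_nonneg w gg_nonneg[of x]
        by (intro mult_mono) (auto intro: mult_nonneg_nonneg)
      finally show ?thesis using a0 by simp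
    qed
  qed
qed

lemma Rs_bound:
  assumes j: "j \<le> m" and x: "0 \<le> x"
  shows "\<bar>Rf fk (Suc j) x\<bar> \<le> Cc m * sqrt (\<gamma> * S * gg x)"
proof -
  have "\<bar>Rf fk (Suc j) x\<bar> \<le> (\<Sum>a<Suc j. \<bar>cf (Suc j) a * (fk a x * fk (Suc j - 1 - a) x)\<bar>)"
    unfolding Rf_def by (rule sum_abs)
  also have "\<dots> \<le> (\<Sum>a<Suc j. cf (Suc j) a * sqrt (\<gamma> * S * gg x))"
  proof (rule sum_mono)
    fix a assume "a \<in> {..<Suc j}"
    then have "a + (Suc j - 1 - a) \<le> m" using j by auto
    then have "(fk a x * fk (Suc j - 1 - a) x)\<^sup>2 \<le> \<gamma> * S * gg x" by (rule pair_bound[OF _ x])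
    then have "\<bar>fk a x * fk (Suc j - 1 - a) x\<bar> \<le> sqrt (\<gamma> * S * gg x)"
      using real_sqrt_le_mono real_sqrt_abs by metis
    moreover have c0: "0 \<le> cf (Suc j) a" by (rule cf_nonneg)
    ultimately show "\<bar>cf (Suc j) a * (fk a x * fk (Suc j - 1 - a) x)\<bar> \<le> cf (Suc j) a * sqrt (\<gamma> * S * gg x)"
      unfolding abs_mult abs_of_nonneg[OF c0] by (rule mult_left_mono)
  qed
  also have "\<dots> = (\<Sum>a<Suc j. cf (Suc j) a) * sqrt (\<gamma> * S * gg x)" by (rule sum_distrib_right[symmetric])
  also have "\<dots> \<le> Cc m * sqrt (\<gamma> * S * gg x)"
    using C_le[of "Suc j" m] j gamma_ge(3) S_nonneg gg_nonneg[of x] by (intro mult_right_mono) auto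
  finally show ?thesis .
qed

lemma Qs_sq:
  assumes j: "j \<le> m" and x: "0 \<le> x"
  shows "(Q (Suc j) x)\<^sup>2 \<le> ((K + Cc m * sqrt \<gamma>)\<^sup>2 * S) * gg x"
proof -
  have "(fk (Suc j) x)\<^sup>2 \<le> gg x" using gg_k[of "Suc j" x] j by simp
  then have f1: "\<bar>fk (Suc j) x\<bar> \<le> sqrt (gg x)" using real_sqrt_le_mono real_sqrt_abs by metis
  have "\<bar>fk (Suc j) x * I x\<bar> \<le> sqrt (gg x) * (K * sqrt S)"
    unfolding abs_mult by (intro mult_mono f1 I_bound x) (auto simp: gg_nonneg)
  moreover have "\<bar>Rf fk (Suc j) x\<bar> \<le> Cc m * (sqrt \<gamma> * (sqrt S * sqrt (gg x)))"
    using Rs_bound[OF j x] by (simp add: real_sqrt_mult mult_ac)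
  ultimately have "\<bar>Q (Suc j) x\<bar> \<le> (K + Cc m * sqrt \<gamma>) * (sqrt S * sqrt (gg x))"
    unfolding Q_def by (simp add: algebra_simps)
  then have "(Q (Suc j) x)\<^sup>2 \<le> ((K + Cc m * sqrt \<gamma>) * (sqrt S * sqrt (gg x)))\<^sup>2" by (rule sq_le_of_abs)
  also have "\<dots> = ((K + Cc m * sqrt \<gamma>)\<^sup>2 * S) * gg x"
    using S_nonneg gg_nonneg[of x] by (simp add: power_mult_distrib)
  finally show ?thesis .
qed

lemma gg_si_int:
  "set_integrable lborel {0..} (\<lambda>x. gg x * exp (w * x)) \<and>
   (LINT x:{0..}|lborel. gg x * exp (w * x)) \<le> real (Suc m) * S + S / w\<^sup>2"
proof -
  define h where "h k x = (if k = 0 then (S / w) * exp (- w * x) else (fk k x)\<^sup>2 * exp (w * x))" for k x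
  have eq: "gg x * exp (w * x) = (\<Sum>k\<in>{0..Suc m}. h k x)" for x
  proof -
    have 1: "(\<Sum>k\<in>{0..Suc m}. h k x) = h 0 x + (\<Sum>k\<in>{Suc 0..Suc m}. h k x)"
      by (rule sum.atLeast_Suc_atMost) simp
    have 2: "(\<Sum>k\<in>{Suc 0..Suc m}. h k x) = (\<Sum>k\<in>{Suc 0..Suc m}. (fk k x)\<^sup>2 * exp (w * x))"
      by (rule sum.cong) (auto simp: h_def)
    have 3: "h 0 x = (S / w) * exp (- (2 * w) * x) * exp (w * x)"
      by (simp add: h_def exp_add[symmetric] algebra_simps)
    have 4: "gg x * exp (w * x) = (\<Sum>k\<in>{Suc 0..Suc m}. (fk k x)\<^sup>2 * exp (w * x)) + (S / w) * exp (- (2 * w) * x) * exp (w * x)"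
      unfolding gg_def distrib_right sum_distrib_right ..
    show ?thesis using 1 2 3 4 by simp
  qed
  have hi: "set_integrable lborel {0..} (h k)" if "k \<in> {0..Suc m}" for k
  proof (cases k)
    case 0 then show ?thesis unfolding h_def using exp_si_atLeast[OF w] by simp
  next
    case (Suc i)
    then have "i \<le> m" using that by simp
    then show ?thesis unfolding h_def using si_k[of i] Suc by simp
  qed
  have hb: "(LINT x:{0..}|lborel. h k x) \<le> (if k = 0 then S / w\<^sup>2 else S)" if "k \<in> {0..Suc m}" for k
  proof (cases k)
    case 0
    have "(LINT x:{0..}|lborel. h k x) = (S / w) * (LINT x:{0..}|lborel. exp (- w * x))"
      unfolding h_def using 0 by simp
    also have "\<dots> \<le> (S / w) * (1 / w)"
      using S_nonneg w by (intro mult_left_mono exp_int_atLeast_le) auto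
    finally show ?thesis using 0 by (simp add: power2_eq_square)
  next
    case (Suc i)
    then have "i \<le> m" using that by simp
    then show ?thesis unfolding h_def using E_le_S[of i] Suc by simp
  qed
  from si_sum[of "{0..Suc m}" "{0..}" h] hi
  have s: "set_integrable lborel {0..} (\<lambda>x. \<Sum>k\<in>{0..Suc m}. h k x)"
    "(LINT x:{0..}|lborel. (\<Sum>k\<in>{0..Suc m}. h k x)) = (\<Sum>k\<in>{0..Suc m}. LINT x:{0..}|lborel. h k x)"
    by auto
  have "(\<Sum>k\<in>{0..Suc m}. LINT x:{0..}|lborel. h k x) \<le> (\<Sum>k\<in>{0..Suc m}. (if k = 0 then S / w\<^sup>2 else S))"
    by (rule sum_mono) (rule hb)
  also have "\<dots> = S / w\<^sup>2 + (\<Sum>k\<in>{Suc 0..Suc m}. S)"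
    by (subst sum.atLeast_Suc_atMost) auto
  also have "\<dots> = real (Suc m) * S + S / w\<^sup>2" by simp
  finally show ?thesis using s unfolding eq by simp
qed

end

context fs
begin

lemma Q_meas:
  assumes j: "j \<le> m"
  shows "set_borel_measurable lborel {0..} (\<lambda>x. (Q (Suc j) x)\<^sup>2 * exp (w * x))"
proof -
  define \<iota> where "\<iota> k x = indicator {0..} x * fk k x" for k x
  define \<iota>I where "\<iota>I x = indicator {0..} x * I x" for x
  have id: "indicator {0..} x *\<^sub>R ((Q (Suc j) x)\<^sup>2 * exp (w * x))
     = (\<iota> (Suc j) x * \<iota>I x + (\<Sum>a<Suc j. cf (Suc j) a * (\<iota> a x * \<iota> (Suc j - 1 - a) x)))\<^sup>2 * exp (w * x)" for x
  proof (cases "0 \<le> x")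
    case True then show ?thesis by (simp add: \<iota>_def \<iota>I_def Q_def Rf_def)
  next
    case False then show ?thesis by (simp add: \<iota>_def \<iota>I_def)
  qed
  have m1: "\<iota> (Suc j) \<in> borel_measurable borel" unfolding \<iota>_def using meas_k[of "Suc j"] j by simp
  have mI: "\<iota>I \<in> borel_measurable borel" unfolding \<iota>I_def by (rule meas_I)
  have m2: "(\<lambda>x. cf (Suc j) a * (\<iota> a x * \<iota> (Suc j - 1 - a) x)) \<in> borel_measurable borel" if "a \<in> {..<Suc j}" for a
  proof -
    have "a \<le> Suc m" "Suc j - 1 - a \<le> Suc m" using that j by auto
    then have "\<iota> a \<in> borel_measurable borel" "\<iota> (Suc j - 1 - a) \<in> borel_measurable borel"
      unfolding \<iota>_def using meas_k by auto
    then show ?thesis by measurable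
  qed
  have m3: "(\<lambda>x. \<Sum>a<Suc j. cf (Suc j) a * (\<iota> a x * \<iota> (Suc j - 1 - a) x)) \<in> borel_measurable borel"
    by (rule borel_measurable_sum) (rule m2)
  have "(\<lambda>x. (\<iota> (Suc j) x * \<iota>I x + (\<Sum>a<Suc j. cf (Suc j) a * (\<iota> a x * \<iota> (Suc j - 1 - a) x)))\<^sup>2 * exp (w * x))
        \<in> borel_measurable borel"
    using m1 mI m3 by measurable
  then show ?thesis unfolding set_borel_measurable_def id by simp
qed

definition M3 where "M3 = (K + Cc m * sqrt \<gamma>)\<^sup>2"

lemma M3_nonneg: "0 \<le> M3" unfolding M3_def by simp

lemma Q_si_E:
  assumes j: "j \<le> m"
  shows "set_integrable lborel {0..} (\<lambda>x. (Q (Suc j) x)\<^sup>2 * exp (w * x))"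
    "(LINT x:{0..}|lborel. (Q (Suc j) x)\<^sup>2 * exp (w * x)) \<le> M3 * S * (real (Suc m) * S + S / w\<^sup>2)"
proof -
  have gsi: "set_integrable lborel {0..} (\<lambda>x. gg x * exp (w * x))" using gg_si_int by blast
  have bsi: "set_integrable lborel {0..} (\<lambda>x. (M3 * S) * (gg x * exp (w * x)))"
    using gsi by (rule set_integrable_mult_right)
  have bnd: "(Q (Suc j) x)\<^sup>2 * exp (w * x) \<le> (M3 * S) * (gg x * exp (w * x))" if "0 \<le> x" for x
    using Qs_sq[OF j that] unfolding M3_def by (simp add: mult_right_mono mult.assoc)
  show si: "set_integrable lborel {0..} (\<lambda>x. (Q (Suc j) x)\<^sup>2 * exp (w * x))"
  proof (rule set_integrable_bound[OF bsi Q_meas[OF j]])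
    show "AE x in lborel. x \<in> {0..} \<longrightarrow> norm ((Q (Suc j) x)\<^sup>2 * exp (w * x)) \<le> norm ((M3 * S) * (gg x * exp (w * x)))"
    proof (intro AE_I2 impI)
      fix x :: real assume "x \<in> {0..}"
      then have b: "(Q (Suc j) x)\<^sup>2 * exp (w * x) \<le> (M3 * S) * (gg x * exp (w * x))" using bnd by simp
      have nn: "0 \<le> (Q (Suc j) x)\<^sup>2 * exp (w * x)" by simp
      show "norm ((Q (Suc j) x)\<^sup>2 * exp (w * x)) \<le> norm ((M3 * S) * (gg x * exp (w * x)))"
        unfolding real_norm_def abs_of_nonneg[OF nn] using b abs_ge_self order_trans by blast
    qed
  qed
  have "(LINT x:{0..}|lborel. (Q (Suc j) x)\<^sup>2 * exp (w * x)) \<le> (LINT x:{0..}|lborel. (M3 * S) * (gg x * exp (w * x)))"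
    using bnd by (intro set_integral_mono[OF si bsi]) auto
  also have "\<dots> = (M3 * S) * (LINT x:{0..}|lborel. gg x * exp (w * x))" by simp
  also have "\<dots> \<le> (M3 * S) * (real (Suc m) * S + S / w\<^sup>2)"
    using gg_si_int M3_nonneg S_nonneg by (intro mult_left_mono) auto
  finally show "(LINT x:{0..}|lborel. (Q (Suc j) x)\<^sup>2 * exp (w * x)) \<le> M3 * S * (real (Suc m) * S + S / w\<^sup>2)" .
qed

lemma Q_lim:
  assumes j: "j \<le> m"
  shows "\<exists>L. (Q j \<longlongrightarrow> L) at_top"
proof -
  have l: "(fk k \<longlongrightarrow> at_infty (fk k)) at_top" if "k \<le> m" for k
    by (rule inH_lim[OF inH_k[OF that]])
  have "((\<lambda>x. fk j x * I x + (\<Sum>a<j. cf j a * (fk a x * fk (j - 1 - a) x))) \<longlongrightarrow>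
        at_infty (fk j) * (LINT y:{0..}|lborel. f y) + (\<Sum>a<j. cf j a * (at_infty (fk a) * at_infty (fk (j - 1 - a))))) at_top"
    using j by (intro tendsto_add tendsto_mult tendsto_sum tendsto_const I_lim l) auto
  moreover have "Q j = (\<lambda>x. fk j x * I x + (\<Sum>a<j. cf j a * (fk a x * fk (j - 1 - a) x)))"
    by (rule ext) (simp add: Q_def Rf_def)
  ultimately show ?thesis by auto
qed

lemma inH_Q: "j \<le> m \<Longrightarrow> inH w (Q j)"
  unfolding inH_def using wd_Q Q_si_E(1) Q_lim by blast

definition P where "P = (\<lambda>x. f x * Iop f x)"

lemma P_eq: "j \<le> m \<Longrightarrow> 0 \<le> x \<Longrightarrow> A0pow w j P x = Q j x"
proof (induction j arbitrary: x)
  case 0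
  then show ?case by (simp add: P_def Q_def Rf_def I_def)
next
  case (Suc j)
  then have j: "j \<le> m" "Suc j \<le> m" by auto
  have eq: "\<And>y. 0 \<le> y \<Longrightarrow> A0pow w j P y = Q j y" using Suc.IH j by blast
  have g: "inH w (A0pow w j P)" by (rule inH_transfer[OF inH_Q[OF j(1)] eq])
  have q: "weak_deriv (A0pow w j P) (Q (Suc j))" using wd_local[OF wd_Q[OF j(1)] eq, of "Q (Suc j)"] by simp
  show ?case using Ader_eq_cont[OF g q inH_Q[OF j(2)] Suc.prems(2)] by simp
qed

lemma inD_P: "inD w m P"
  unfolding inD_def
proof (intro allI impI)
  fix j assume j: "j \<le> m"
  show "inH w (A0pow w j P)" by (rule inH_transfer[OF inH_Q[OF j]]) (rule P_eq[OF j])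
qed

lemma HnP:
  assumes j: "j \<le> m"
  shows "Hnorm2 w (A0pow w j P) \<le> ((\<beta> * K + Cc m * \<beta>\<^sup>2)\<^sup>2 + M3 * (real (Suc m) + 1 / w\<^sup>2)) * S\<^sup>2"
proof -
  have eq: "\<And>y. 0 \<le> y \<Longrightarrow> A0pow w j P y = Q j y" using P_eq[OF j] by blast
  have g: "inH w (A0pow w j P)" by (rule inH_transfer[OF inH_Q[OF j] eq])
  have q: "weak_deriv (A0pow w j P) (Q (Suc j))" using wd_local[OF wd_Q[OF j] eq, of "Q (Suc j)"] by simp
  have "Hnorm2 w (A0pow w j P) \<le> ((\<beta> * K + Cc m * \<beta>\<^sup>2) * S)\<^sup>2 + M3 * S * (real (Suc m) * S + S / w\<^sup>2)"
  proof (rule Hnorm2_upper[OF g q Q_si_E(1)[OF j]])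
    fix x :: real assume "0 \<le> x"
    then show "\<bar>A0pow w j P x\<bar> \<le> (\<beta> * K + Cc m * \<beta>\<^sup>2) * S" using eq Q_bound[OF j] by simp
  qed (rule Q_si_E(2)[OF j])
  also have "\<dots> = ((\<beta> * K + Cc m * \<beta>\<^sup>2)\<^sup>2 + M3 * (real (Suc m) + 1 / w\<^sup>2)) * S\<^sup>2"
    using w by (simp add: power2_eq_square field_simps)
  finally show ?thesis .
qed

lemma Dnorm_P: "Dnorm w m P \<le> N0 w m * (Dnorm w m f)\<^sup>2"
proof -
  define B where "B = (\<beta> * K + Cc m * \<beta>\<^sup>2)\<^sup>2 + M3 * (real (Suc m) + 1 / w\<^sup>2)"
  have "(\<Sum>j\<le>m. Hnorm2 w (A0pow w j P)) \<le> (\<Sum>j\<le>m. B * S\<^sup>2)"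
    by (rule sum_mono) (use HnP in \<open>auto simp: B_def\<close>)
  also have "\<dots> = (real (Suc m) * B) * S\<^sup>2" by simp
  finally have "Dnorm w m P \<le> sqrt ((real (Suc m) * B) * S\<^sup>2)"
    unfolding Dnorm_def by (rule real_sqrt_le_mono)
  also have "\<dots> = sqrt (real (Suc m) * B) * S"
    using S_nonneg by (simp add: real_sqrt_mult)
  also have "sqrt (real (Suc m) * B) = N0 w m"
    unfolding N0_def B_def M3_def \<gamma>_def \<beta>_def K_def ..
  also have "S = (Dnorm w m f)\<^sup>2"
    unfolding Dnorm_def S_def using S_nonneg[unfolded S_def] by simp
  finally show ?thesis .
qed

end

theorem lemma5p5:
  fixes w :: real and m :: nat
  assumes "w > 0" and "m \<ge> 1"
  shows "\<exists>N::real. \<forall>f. inD w m f \<and> (f \<longlongrightarrow> 0) at_top \<longrightarrow>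
           inD w m (\<lambda>x. f x * Iop f x) \<and>
           Dnorm w m (\<lambda>x. f x * Iop f x) \<le> N * (Dnorm w m f)\<^sup>2"
proof (intro exI allI impI)
  fix f :: "real \<Rightarrow> real"
  assume h: "inD w m f \<and> (f \<longlongrightarrow> 0) at_top"
  interpret fs w m f using assms(1) h by unfold_locales auto
  show "inD w m (\<lambda>x. f x * Iop f x) \<and> Dnorm w m (\<lambda>x. f x * Iop f x) \<le> N0 w m * (Dnorm w m f)\<^sup>2"
    using inD_P Dnorm_P unfolding P_def by simp
qed

end
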